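(* Let $(Y,\lambda)\in\{-1,1\}\times\{-1,1\}^m$ follow the Ising model $$P(Y,\lambda)=\frac1Z\exp\Big(\theta_Y Y+\sum_{i}\theta_i\lambda_iY+\sum_{(i,j)\in E_\lambda}\theta_{ij}\lambda_i\lambda_j\Big),$$ with all canonical parameters nonnegative. Here $E_\lambda$ is a set of $|E_\lambda|=d$ unordered pairs of distinct sources, each source in at most one pair. Suppose the model is learned from $n_L$ i.i.d. labeled samples $(y^{(t)},\lambda^{(t)})_{t=1}^{n_L}$ of $(Y,\lambda)$, using the accuracy estimates $\tilde a_i^L=\frac1{n_L}\sum_{t=1}^{n_L}\lambda_i^{(t)}y^{(t)}$ together with the inference rule below. Then the excess generalization error satisfies $$R_L^e\le\frac{m}{2n_L}+\mathcal B_I+o(1/n_L),\qquad\text{where }\mathcal B_I=\sum_{(i,j)\in E_\lambda}I(\lambda_i;\lambda_j\mid Y).$$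
   Context: Inference rule. Set $$\tilde P(\lambda_i=\pm1\mid Y=1)=\frac{1\pm\tilde a_i}{2},\qquad \tilde P(\lambda_i=\pm1\mid Y=-1)=\frac{1\mp\tilde a_i}{2}.$$ Then define $$\tilde P(Y=y\mid\lambda=s)=\frac{\prod_i\tilde P(\lambda_i=s_i\mid Y=y)P(Y=y)}{\hat P(\lambda=s)},$$ where $P(Y=y)$ is the known true class balance and $\hat P$ is the empirical distribution of the source vectors in the dataset. Loss and errors. The loss is $$l(\tilde Y,Y)=-\frac{1+Y}{2}\log\tilde P(Y=1\mid\lambda)-\frac{1-Y}{2}\log\tilde P(Y=-1\mid\lambda).$$ The generalization error $R_L$ is $\mathbb E[l(\tilde Y,Y)]$, with expectation over a fresh $(Y,\lambda)\sim P$ and over the dataset. The excess generalization error is $R_L^e=R_L-H(Y\mid\lambda)$. $I(\cdot;\cdot\mid Y)$ denotes conditional mutual information under $P$. *)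

theory Defs
  imports "HOL-Library.FuncSet" "HOL-Library.Landau_Symbols"
begin

definition pm1 :: "real set" where "pm1 = {-1, 1}"

definition cube :: "nat \<Rightarrow> (nat \<Rightarrow> real) set" where
  "cube m = PiE {..<m} (\<lambda>_. pm1)"

text \<open>Exponent of the Ising model; E is a set of unordered pairs {i,j}.\<close>
definition ising_energy ::
  "nat \<Rightarrow> real \<Rightarrow> (nat \<Rightarrow> real) \<Rightarrow> nat set set \<Rightarrow> (nat set \<Rightarrow> real) \<Rightarrow> real \<Rightarrow> (nat \<Rightarrow> real) \<Rightarrow> real" where
  "ising_energy m thY th E thE y s =
     thY * y + (\<Sum>i<m. th i * s i * y) + (\<Sum>e\<in>E. thE e * (\<Prod>i\<in>e. s i))"

definition ising_Z ::
  "nat \<Rightarrow> real \<Rightarrow> (nat \<Rightarrow> real) \<Rightarrow> nat set set \<Rightarrow> (nat set \<Rightarrow> real) \<Rightarrow> real" where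
  "ising_Z m thY th E thE = (\<Sum>y\<in>pm1. \<Sum>s\<in>cube m. exp (ising_energy m thY th E thE y s))"

definition ising ::
  "nat \<Rightarrow> real \<Rightarrow> (nat \<Rightarrow> real) \<Rightarrow> nat set set \<Rightarrow> (nat set \<Rightarrow> real) \<Rightarrow> real \<Rightarrow> (nat \<Rightarrow> real) \<Rightarrow> real" where
  "ising m thY th E thE y s = exp (ising_energy m thY th E thE y s) / ising_Z m thY th E thE"

text \<open>In what follows P is a joint pmf on pm1 \<times> cube m.\<close>

definition prY :: "(real \<Rightarrow> (nat \<Rightarrow> real) \<Rightarrow> real) \<Rightarrow> nat \<Rightarrow> real \<Rightarrow> real" where
  "prY P m y = (\<Sum>s\<in>cube m. P y s)"

definition prLam :: "(real \<Rightarrow> (nat \<Rightarrow> real) \<Rightarrow> real) \<Rightarrow> (nat \<Rightarrow> real) \<Rightarrow> real" where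
  "prLam P s = (\<Sum>y\<in>pm1. P y s)"

definition datasets :: "nat \<Rightarrow> nat \<Rightarrow> (nat \<Rightarrow> real \<times> (nat \<Rightarrow> real)) set" where
  "datasets m n = PiE {..<n} (\<lambda>_. pm1 \<times> cube m)"

definition pr_data :: "(real \<Rightarrow> (nat \<Rightarrow> real) \<Rightarrow> real) \<Rightarrow> nat \<Rightarrow> (nat \<Rightarrow> real \<times> (nat \<Rightarrow> real)) \<Rightarrow> real" where
  "pr_data P n D = (\<Prod>t<n. P (fst (D t)) (snd (D t)))"

definition acc_est :: "nat \<Rightarrow> (nat \<Rightarrow> real \<times> (nat \<Rightarrow> real)) \<Rightarrow> nat \<Rightarrow> real" where
  "acc_est n D i = (\<Sum>t<n. snd (D t) i * fst (D t)) / real n"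

text \<open>P~(lambda_i = v | Y = y) = (1 + v y a_i)/2, i.e. (1 \<plusminus> a_i)/2 resp. (1 \<mp> a_i)/2.\<close>
definition src_cond :: "real \<Rightarrow> real \<Rightarrow> real \<Rightarrow> real" where
  "src_cond a v y = (1 + v * y * a) / 2"

definition emp_lam :: "nat \<Rightarrow> (nat \<Rightarrow> real \<times> (nat \<Rightarrow> real)) \<Rightarrow> (nat \<Rightarrow> real) \<Rightarrow> real" where
  "emp_lam n D s = real (card {t\<in>{..<n}. snd (D t) = s}) / real n"

definition post_est ::
  "(real \<Rightarrow> (nat \<Rightarrow> real) \<Rightarrow> real) \<Rightarrow> nat \<Rightarrow> nat \<Rightarrow> (nat \<Rightarrow> real \<times> (nat \<Rightarrow> real)) \<Rightarrow> real \<Rightarrow> (nat \<Rightarrow> real) \<Rightarrow> real" where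
  "post_est P m n D y s =
     (\<Prod>i<m. src_cond (acc_est n D i) (s i) y) * prY P m y / emp_lam n D s"

definition loss ::
  "(real \<Rightarrow> (nat \<Rightarrow> real) \<Rightarrow> real) \<Rightarrow> nat \<Rightarrow> nat \<Rightarrow> (nat \<Rightarrow> real \<times> (nat \<Rightarrow> real)) \<Rightarrow> real \<Rightarrow> (nat \<Rightarrow> real) \<Rightarrow> real" where
  "loss P m n D y s =
     - ((1 + y) / 2) * ln (post_est P m n D 1 s) - ((1 - y) / 2) * ln (post_est P m n D (-1) s)"

definition gen_err :: "(real \<Rightarrow> (nat \<Rightarrow> real) \<Rightarrow> real) \<Rightarrow> nat \<Rightarrow> nat \<Rightarrow> real" where
  "gen_err P m n =
     (\<Sum>D\<in>datasets m n. pr_data P n D *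
        (\<Sum>y\<in>pm1. \<Sum>s\<in>cube m. P y s * loss P m n D y s))"

definition cond_ent :: "(real \<Rightarrow> (nat \<Rightarrow> real) \<Rightarrow> real) \<Rightarrow> nat \<Rightarrow> real" where
  "cond_ent P m = - (\<Sum>y\<in>pm1. \<Sum>s\<in>cube m. P y s * ln (P y s / prLam P s))"

definition excess_err :: "(real \<Rightarrow> (nat \<Rightarrow> real) \<Rightarrow> real) \<Rightarrow> nat \<Rightarrow> nat \<Rightarrow> real" where
  "excess_err P m n = gen_err P m n - cond_ent P m"

definition pr1 :: "(real \<Rightarrow> (nat \<Rightarrow> real) \<Rightarrow> real) \<Rightarrow> nat \<Rightarrow> nat \<Rightarrow> real \<Rightarrow> real \<Rightarrow> real" where
  "pr1 P m i y a = (\<Sum>s\<in>{s\<in>cube m. s i = a}. P y s)"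

definition pr2 :: "(real \<Rightarrow> (nat \<Rightarrow> real) \<Rightarrow> real) \<Rightarrow> nat \<Rightarrow> nat \<Rightarrow> nat \<Rightarrow> real \<Rightarrow> real \<Rightarrow> real \<Rightarrow> real" where
  "pr2 P m i j y a b = (\<Sum>s\<in>{s\<in>cube m. s i = a \<and> s j = b}. P y s)"

definition cmi :: "(real \<Rightarrow> (nat \<Rightarrow> real) \<Rightarrow> real) \<Rightarrow> nat \<Rightarrow> nat \<Rightarrow> nat \<Rightarrow> real" where
  "cmi P m i j = (\<Sum>y\<in>pm1. \<Sum>a\<in>pm1. \<Sum>b\<in>pm1.
      pr2 P m i j y a b *
      ln ((pr2 P m i j y a b / prY P m y) / ((pr1 P m i y a / prY P m y) * (pr1 P m j y b / prY P m y))))"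

end

theory Submission
  imports Defs "HOL-Probability.Probability" "HOL-Real_Asymp.Real_Asymp"
begin

definition bw :: "nat \<Rightarrow> real \<Rightarrow> nat \<Rightarrow> real" where
  "bw n q k = real (n choose k) * q ^ k * (1 - q) ^ (n - k)"

definition BS :: "nat \<Rightarrow> real \<Rightarrow> (nat \<Rightarrow> real) \<Rightarrow> real" where
  "BS n q F = (\<Sum>k\<le>n. bw n q k * F k)"

lemma bw_Suc_Suc: "bw (Suc n) q (Suc k) = q * bw n q k + (1 - q) * bw n q (Suc k)"
proof (cases "k < n")
  case True
  then have e: "Suc n - Suc k = Suc (n - Suc k)" "n - k = Suc (n - Suc k)" by auto
  show ?thesis unfolding bw_def binomial_Suc_Suc of_nat_add e by (simp add: algebra_simps)
next
  case False
  then show ?thesis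
  proof (cases "k = n")
    case True then show ?thesis by (simp add: bw_def)
  next
    case False
    with \<open>\<not> k < n\<close> show ?thesis by (simp add: bw_def binomial_eq_0)
  qed
qed

lemma bw_Suc_0: "bw (Suc n) q 0 = (1 - q) * bw n q 0"
  by (simp add: bw_def)

lemma bw_nonneg: "0 \<le> q \<Longrightarrow> q \<le> 1 \<Longrightarrow> 0 \<le> bw n q k"
  by (simp add: bw_def)

lemma BS_Suc: "BS (Suc n) q F = q * BS n q (\<lambda>k. F (Suc k)) + (1 - q) * BS n q F"
proof -
  have "BS (Suc n) q F = bw (Suc n) q 0 * F 0 + (\<Sum>k\<le>n. bw (Suc n) q (Suc k) * F (Suc k))"
    unfolding BS_def by (subst sum.atMost_Suc_shift) simp
  also have "(\<Sum>k\<le>n. bw (Suc n) q (Suc k) * F (Suc k)) = (\<Sum>k\<le>n. q * (bw n q k * F (Suc k)) + (1 - q) * (bw n q (Suc k) * F (Suc k)))"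
    by (intro sum.cong) (simp_all add: bw_Suc_Suc algebra_simps)
  also have "\<dots> = q * (\<Sum>k\<le>n. bw n q k * F (Suc k)) + (1 - q) * (\<Sum>k\<le>n. bw n q (Suc k) * F (Suc k))"
    by (simp add: sum.distrib sum_distrib_left)
  also have "bw (Suc n) q 0 * F 0 = (1 - q) * bw n q 0 * F 0"
    by (simp add: bw_Suc_0)
  also have "(\<Sum>k\<le>n. bw n q (Suc k) * F (Suc k)) = (\<Sum>k\<le>Suc n. bw n q k * F k) - bw n q 0 * F 0"
    by (subst sum.atMost_Suc_shift) simp
  also have "(\<Sum>k\<le>Suc n. bw n q k * F k) = BS n q F"
    by (simp add: BS_def bw_def)
  finally show ?thesis by (simp add: BS_def algebra_simps)
qed

lemma BS_0: "BS 0 q F = F 0"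
  by (simp add: BS_def bw_def)

lemma BS_add: "BS n q (\<lambda>k. F k + G k) = BS n q F + BS n q G"
  by (simp add: BS_def algebra_simps sum.distrib)

lemma BS_cmult: "BS n q (\<lambda>k. c * F k) = c * BS n q F"
  by (simp add: BS_def algebra_simps sum_distrib_left)

lemma BS_diff: "BS n q (\<lambda>k. F k - G k) = BS n q F - BS n q G"
  by (simp add: BS_def algebra_simps sum_subtractf)

lemma BS_mono: "0 \<le> q \<Longrightarrow> q \<le> 1 \<Longrightarrow> (\<And>k. k \<le> n \<Longrightarrow> F k \<le> G k) \<Longrightarrow> BS n q F \<le> BS n q G"
  unfolding BS_def by (intro sum_mono mult_left_mono) (auto simp: bw_nonneg)

lemma BS_const: "BS n q (\<lambda>_. c) = c"
  by (induction n) (simp_all add: BS_0 BS_Suc algebra_simps)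

lemma BS_id: "BS n q (\<lambda>k. real k) = real n * q"
  by (induction n) (simp_all add: BS_0 BS_Suc BS_add BS_const algebra_simps)

lemma BS_sq: "BS n q (\<lambda>k. (real k)\<^sup>2) = real n * q * (1 - q) + (real n * q)\<^sup>2"
proof (induction n)
  case 0 then show ?case by (simp add: BS_0)
next
  case (Suc n)
  have "BS n q (\<lambda>k. (real (Suc k))\<^sup>2) = BS n q (\<lambda>k. (real k)\<^sup>2 + 2 * real k + 1)"
    by (simp add: power2_eq_square algebra_simps)
  also have "\<dots> = BS n q (\<lambda>k. (real k)\<^sup>2) + 2 * (real n * q) + 1"
    by (simp add: BS_add BS_cmult BS_const BS_id)
  finally show ?case using Suc by (simp add: BS_Suc power2_eq_square algebra_simps)
qed

lemma BS_var: assumes "n > 0" shows "BS n q (\<lambda>k. (real k / real n - q)\<^sup>2) = q * (1 - q) / real n"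
proof -
  have "BS n q (\<lambda>k. (real k / real n - q)\<^sup>2) = BS n q (\<lambda>k. (1 / (real n)\<^sup>2) * (real k)\<^sup>2 + (- 2 * q / real n) * real k + q\<^sup>2)"
    by (rule arg_cong[where f="BS n q"]) (use assms in \<open>auto simp: fun_eq_iff power2_eq_square field_simps\<close>)
  also have "\<dots> =
     (1 / (real n)\<^sup>2) * BS n q (\<lambda>k. (real k)\<^sup>2) + (- 2 * q / real n) * BS n q real + q\<^sup>2"
    by (simp only: BS_add BS_cmult BS_const)
  also have "\<dots> = q * (1 - q) / real n"
    using assms by (simp only: BS_sq BS_id) (simp add: power2_eq_square field_simps)
  finally show ?thesis .
qed

lemma BS_mean: assumes "n > 0" shows "BS n q (\<lambda>k. real k / real n) = q"
  using assms BS_cmult[of n q "1 / real n" real] by (simp add: BS_id)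

lemma BS_zero: "BS n q (\<lambda>k. if k = 0 then c else 0) = (1 - q) ^ n * c"
  by (simp add: BS_def bw_def if_distrib sum.delta cong: if_cong)

lemma BS_tail:
  assumes "0 \<le> q" "q \<le> 1" "n > 0" "\<epsilon> \<ge> 0"
  shows "BS n q (\<lambda>k. if \<bar>real k / real n - q\<bar> \<ge> \<epsilon> then 1 else 0) \<le> 2 * exp (-2 * real n * \<epsilon>\<^sup>2)"
proof -
  interpret binomial_distribution n q by unfold_locales (use assms in auto)
  have e: "real_of_int (- 2 * int n) = - 2 * real n" by simp
  have "measure_pmf.prob (binomial_pmf n q) {x. \<bar>real x / real n - q\<bar> \<ge> \<epsilon>} \<le> 2 * exp (-2 * real n * \<epsilon>\<^sup>2)"
    using prob_abs_ge'[OF assms(3) assms(4)] unfolding e .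
  moreover have "measure_pmf.prob (binomial_pmf n q) {x. \<bar>real x / real n - q\<bar> \<ge> \<epsilon>}
     = measure_pmf.expectation (binomial_pmf n q) (indicator {x. \<bar>real x / real n - q\<bar> \<ge> \<epsilon>})"
    by (subst Bochner_Integration.integral_indicator) simp
  moreover have "\<dots> = (\<Sum>k\<le>n. (real (n choose k) * q ^ k * (1 - q) ^ (n - k)) *\<^sub>R indicator {x. \<bar>real x / real n - q\<bar> \<ge> \<epsilon>} k)"
    using assms by (intro expectation_binomial_pmf') auto
  moreover have "\<dots> = BS n q (\<lambda>k. if \<bar>real k / real n - q\<bar> \<ge> \<epsilon> then 1 else 0)"
    unfolding BS_def bw_def by (intro sum.cong refl) (simp add: indicator_def)
  ultimately show ?thesis by linarith
qed

lemma kl_quad: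
  fixes p x \<delta> c :: real
  assumes p: "0 < p" "p < 1" and c: "c = p * (1 - p) - \<delta>" "c > 0"
    and x: "0 < x" "x < 1" "\<bar>x - p\<bar> \<le> \<delta>"
  shows "- p * ln x - (1 - p) * ln (1 - x) \<le> - p * ln p - (1 - p) * ln (1 - p) + (x - p)\<^sup>2 / (2 * c)"
proof -
  define \<phi> where "\<phi> t = (t - p)\<^sup>2 / (2 * c) + p * ln t + (1 - p) * ln (1 - t)" for t
  define \<phi>' where "\<phi>' t = (t - p) / c + p / t - (1 - p) / (1 - t)" for t
  have der0: "0 < t \<Longrightarrow> t < 1 \<Longrightarrow> c > 0 \<Longrightarrow> (\<phi> has_real_derivative \<phi>' t) (at t)" for t
    unfolding \<phi>_def \<phi>'_def
    apply (rule derivative_eq_intros refl | simp)+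
    by (simp add: field_simps)
  have der: "0 < t \<Longrightarrow> t < 1 \<Longrightarrow> (\<phi> has_real_derivative \<phi>' t) (at t)" for t
    using der0 \<open>c > 0\<close> by blast
  have eq: "\<phi>' t = (t - p) * (1 / c - 1 / (t * (1 - t)))" if "0 < t" "t < 1" for t
    unfolding \<phi>'_def using that c by (simp add: field_simps)
  have tt: "t * (1 - t) \<ge> c" if "\<bar>t - p\<bar> \<le> \<delta>" "0 \<le> t" "t \<le> 1" for t
  proof -
    have "t * (1 - t) - p * (1 - p) = (t - p) * (1 - t - p)" by (simp add: algebra_simps)
    moreover have "\<bar>(t - p) * (1 - t - p)\<bar> \<le> \<bar>t - p\<bar>"
      using that p by (auto simp: abs_mult intro!: mult_left_le)
    ultimately show ?thesis using that c by linarith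
  qed
  have inv: "1 / c - 1 / (t * (1 - t)) \<ge> 0" if "\<bar>t - p\<bar> \<le> \<delta>" "0 < t" "t < 1" for t
    using tt[of t] that c by (simp add: frac_le)
  have "\<phi> p \<le> \<phi> x"
  proof (cases "p \<le> x")
    case True
    show ?thesis
    proof (rule deriv_nonneg_imp_mono[of p x \<phi> \<phi>'])
      fix t assume t: "t \<in> {p..x}"
      then have t': "0 < t" "t < 1" "\<bar>t - p\<bar> \<le> \<delta>" using p x by auto
      show "(\<phi> has_real_derivative \<phi>' t) (at t)" using der t' by auto
      show "\<phi>' t \<ge> 0" using eq[OF t'(1,2)] inv[OF t'(3) t'(1,2)] t by auto
    qed (use True in auto)
  next
    case False
    have "(\<lambda>t. - \<phi> t) x \<le> (\<lambda>t. - \<phi> t) p"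
    proof (rule deriv_nonneg_imp_mono[of x p _ "\<lambda>t. - \<phi>' t"])
      fix t assume t: "t \<in> {x..p}"
      then have t': "0 < t" "t < 1" "\<bar>t - p\<bar> \<le> \<delta>" using p x by auto
      show "((\<lambda>t. - \<phi> t) has_real_derivative - \<phi>' t) (at t)" using der t' by (auto intro: DERIV_minus)
      show "- \<phi>' t \<ge> 0" using eq[OF t'(1,2)] inv[OF t'(3) t'(1,2)] t
        by (auto simp: mult_nonpos_nonneg)
    qed (use False in auto)
    then show ?thesis by simp
  qed
  then show ?thesis unfolding \<phi>_def by simp
qed

definition Gn :: "nat \<Rightarrow> real \<Rightarrow> real" where
  "Gn n x = (if x = 0 then ln (real n) else - ln x)"

definition Vn :: "nat \<Rightarrow> real \<Rightarrow> nat \<Rightarrow> real" where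
  "Vn n p k = p * Gn n (real k / real n) + (1 - p) * Gn n (1 - real k / real n)"

definition Hb :: "real \<Rightarrow> real" where
  "Hb p = - p * ln p - (1 - p) * ln (1 - p)"

lemma Hb_nonneg: "0 < p \<Longrightarrow> p < 1 \<Longrightarrow> Hb p \<ge> 0"
proof -
  assume p: "0 < p" "p < 1"
  have "ln p \<le> 0" "ln (1 - p) \<le> 0" using p by auto
  then have "p * ln p \<le> 0" "(1 - p) * ln (1 - p) \<le> 0" using p
    by (auto intro: mult_nonneg_nonpos)
  then show ?thesis unfolding Hb_def by simp
qed

lemma Gn_le: assumes "n > 0" "x = 0 \<or> (real n * x \<ge> 1)" shows "Gn n x \<le> ln (real n)"
proof (cases "x = 0")
  case False
  with assms have x: "real n * x \<ge> 1" by auto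
  then have "x > 0" using assms(1) by (metis mult_le_0_iff not_le of_nat_0_le_iff order.trans zero_less_one not_less)
  have "ln (real n * x) \<ge> 0" using x by simp
  then have "ln (real n) + ln x \<ge> 0" using \<open>x > 0\<close> assms(1) by (simp add: ln_mult)
  then show ?thesis using False by (simp add: Gn_def)
qed (simp add: Gn_def)

lemma Vn_bound:
  assumes p: "0 < p" "p < 1" and c: "c = p * (1 - p) - \<delta>" "c > 0" "\<delta> > 0"
    and n: "n > 0" and k: "k \<le> n"
  shows "Vn n p k \<le> Hb p + (real k / real n - p)\<^sup>2 / (2 * c)
          + (if \<bar>real k / real n - p\<bar> \<ge> \<delta> then ln (real n) else 0)"
proof (cases "\<bar>real k / real n - p\<bar> \<ge> \<delta>")
  case True
  have g1: "Gn n (real k / real n) \<le> ln (real n)"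
    using n by (intro Gn_le) (auto simp: field_simps)
  have g2: "Gn n (1 - real k / real n) \<le> ln (real n)"
  proof (intro Gn_le n)
    show "1 - real k / real n = 0 \<or> 1 \<le> real n * (1 - real k / real n)"
    proof (cases "k = n")
      case False
      then have "real k + 1 \<le> real n" using k by linarith
      then have "real n * (real k + 1) \<le> real n * real n" using n by (intro mult_left_mono) auto
      then show ?thesis using n by (auto simp: field_simps)
    qed (use n in auto)
  qed
  have "Vn n p k \<le> p * ln (real n) + (1 - p) * ln (real n)"
    unfolding Vn_def using g1 g2 p by (intro add_mono mult_left_mono) auto
  also have "\<dots> = ln (real n)" by (simp add: algebra_simps)
  finally have "Vn n p k \<le> ln (real n)" .
  moreover have "(real k / real n - p)\<^sup>2 / (2 * c) \<ge> 0" using \<open>c > 0\<close> by simp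
  ultimately show ?thesis using True Hb_nonneg[OF p] by simp
next
  case False
  have h1: "p * (1 - p) < 1 - p" using p mult_strict_right_mono[of p 1 "1 - p"] by simp
  have h2: "p * (1 - p) < p * 1" using p by (intro mult_strict_left_mono) auto
  have "\<delta> < p" using h1 h2 c by linarith
  moreover have "\<delta> < 1 - p" using h1 c(1,2) by linarith
  ultimately have x: "0 < real k / real n" "real k / real n < 1" using False by auto
  have g: "Gn n (real k / real n) = - ln (real k / real n)"
     "Gn n (1 - real k / real n) = - ln (1 - real k / real n)" using x by (auto simp: Gn_def)
  show ?thesis using kl_quad[OF p c(1,2) x] False
    unfolding Vn_def g Hb_def by simp
qed

lemma BS_Vn:
  assumes p: "0 < p" "p < 1" and c: "c = p * (1 - p) - \<delta>" "c > 0" "\<delta> > 0" and n: "n > 0"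
  shows "BS n p (Vn n p) \<le> Hb p + p * (1 - p) / (2 * c * real n) + ln (real n) * (2 * exp (-2 * real n * \<delta>\<^sup>2))"
proof -
  have "BS n p (Vn n p) \<le> BS n p (\<lambda>k. Hb p + (1 / (2 * c)) * (real k / real n - p)\<^sup>2
          + ln (real n) * (if \<bar>real k / real n - p\<bar> \<ge> \<delta> then 1 else 0))"
  proof (intro BS_mono)
    fix k assume "k \<le> n"
    from Vn_bound[OF p c n this] show "Vn n p k \<le> Hb p + (1 / (2 * c)) * (real k / real n - p)\<^sup>2
          + ln (real n) * (if \<bar>real k / real n - p\<bar> \<ge> \<delta> then 1 else 0)"
      by (cases "\<bar>real k / real n - p\<bar> \<ge> \<delta>") simp_all
  qed (use p in auto)
  also have "\<dots> = Hb p + (1 / (2 * c)) * BS n p (\<lambda>k. (real k / real n - p)\<^sup>2)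
          + ln (real n) * BS n p (\<lambda>k. if \<bar>real k / real n - p\<bar> \<ge> \<delta> then 1 else 0)"
    by (simp only: BS_add BS_cmult BS_const)
  also have "\<dots> \<le> Hb p + p * (1 - p) / (2 * c * real n) + ln (real n) * (2 * exp (-2 * real n * \<delta>\<^sup>2))"
    using BS_var[OF n, of p] BS_tail[of p n \<delta>] p n c
    by (intro add_mono mult_left_mono) auto
  finally show ?thesis .
qed

lemma Vn_asymp:
  assumes p: "0 < p" "p < 1" and e: "\<epsilon> > 0"
  shows "eventually (\<lambda>n. BS n p (Vn n p) \<le> Hb p + 1 / (2 * real n) + \<epsilon> / real n) sequentially"
proof -
  define \<eta> where "\<eta> = min (1/2) (\<epsilon>/2)"
  have eta: "0 < \<eta>" "\<eta> \<le> 1/2" "\<eta> \<le> \<epsilon>/2" using e by (auto simp: \<eta>_def)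
  define \<delta> where "\<delta> = \<eta> * (p * (1 - p))"
  define c where "c = p * (1 - p) - \<delta>"
  have pp: "p * (1 - p) > 0" using p by simp
  have dpos: "\<delta> > 0" using eta pp by (simp add: \<delta>_def)
  have c': "c = (1 - \<eta>) * (p * (1 - p))" by (simp add: c_def \<delta>_def algebra_simps)
  have cpos: "c > 0" using c' eta pp by simp
  have lim: "(\<lambda>n::nat. real n * ln (real n) * exp (- (2 * \<delta>\<^sup>2) * real n)) \<longlonglongrightarrow> 0"
    using dpos by real_asymp
  have ev1: "eventually (\<lambda>n. real n * ln (real n) * exp (- (2 * \<delta>\<^sup>2) * real n) < \<epsilon> / 4) sequentially"
    by (rule order_tendstoD(2)[OF lim]) (use e in simp)
  show ?thesis
    using ev1 eventually_gt_at_top[of 0]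
  proof eventually_elim
    case (elim n)
    then have n: "n > 0" by simp
    have A: "BS n p (Vn n p) \<le> Hb p + p * (1 - p) / (2 * c * real n) + ln (real n) * (2 * exp (-2 * real n * \<delta>\<^sup>2))"
      by (rule BS_Vn[OF p c_def cpos dpos n])
    have T1: "p * (1 - p) / (2 * c * real n) = (1 / (2 * (1 - \<eta>))) / real n"
    proof -
      have "2 * c * real n = (2 * (1 - \<eta>) * real n) * (p * (1 - p))" by (simp add: c' algebra_simps)
      moreover have "p * (1 - p) \<noteq> 0" using pp by linarith
      ultimately have "p * (1 - p) / (2 * c * real n) = 1 / (2 * (1 - \<eta>) * real n)"
        by (metis nonzero_divide_mult_cancel_right)
      then show ?thesis by simp
    qed
    have T1': "1 / (2 * (1 - \<eta>)) \<le> 1/2 + \<epsilon>/2"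
    proof -
      have "1 \<le> (1 + 2 * \<eta>) * (1 - \<eta>)" using eta by (simp add: algebra_simps power2_eq_square)
      then have "1 / (2 * (1 - \<eta>)) \<le> 1/2 + \<eta>" using eta by (simp add: field_simps)
      then show ?thesis using eta by simp
    qed
    have T1'': "p * (1 - p) / (2 * c * real n) \<le> (1/2 + \<epsilon>/2) / real n"
      unfolding T1 using T1' n by (intro divide_right_mono) auto
    have T2: "ln (real n) * (2 * exp (-2 * real n * \<delta>\<^sup>2)) =
        2 * (real n * ln (real n) * exp (- (2 * \<delta>\<^sup>2) * real n)) / real n"
      using n by (simp add: field_simps)
    have T2': "2 * (real n * ln (real n) * exp (- (2 * \<delta>\<^sup>2) * real n)) / real n \<le> 2 * (\<epsilon> / 4) / real n"
      using elim n by (intro divide_right_mono mult_left_mono) auto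
    have eq: "(1/2 + \<epsilon>/2) / real n + 2 * (\<epsilon> / 4) / real n = 1 / (2 * real n) + \<epsilon> / real n"
      by (simp add: add_divide_distrib)
    show ?case using A T1'' T2 T2' eq by linarith
  qed
qed

lemma pow_asymp:
  assumes q: "0 < q" "q \<le> 1" and e: "\<epsilon> > 0"
  shows "eventually (\<lambda>n. (1 - q) ^ n * K \<le> \<epsilon> / real n) sequentially"
proof -
  have lim: "(\<lambda>n::nat. real n * exp (- q * real n)) \<longlonglongrightarrow> 0"
    using q by real_asymp
  have ev1: "eventually (\<lambda>n. real n * exp (- q * real n) < \<epsilon> / (\<bar>K\<bar> + 1)) sequentially"
    by (rule order_tendstoD(2)[OF lim]) (use e in simp)
  show ?thesis
    using ev1 eventually_gt_at_top[of 0]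
  proof eventually_elim
    case (elim n)
    then have n: "n > 0" by simp
    have "(1 - q) ^ n \<le> exp (- q) ^ n"
      using q by (intro power_mono) (auto simp: exp_ge_add_one_self[of "-q", simplified])
    also have "\<dots> = exp (- q * real n)" by (simp add: exp_of_nat_mult[symmetric] mult.commute)
    finally have a: "(1 - q) ^ n \<le> exp (- q * real n)" .
    have "(1 - q) ^ n * K \<le> (1 - q) ^ n * \<bar>K\<bar>" using q by (intro mult_left_mono) auto
    also have "\<dots> \<le> exp (- q * real n) * \<bar>K\<bar>" using a by (intro mult_right_mono) auto
    also have "exp (- q * real n) * \<bar>K\<bar> = (real n * exp (- q * real n)) * \<bar>K\<bar> / real n"
      using n by simp
    also have "\<dots> \<le> (\<epsilon> / (\<bar>K\<bar> + 1)) * \<bar>K\<bar> / real n"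
      using elim by (intro divide_right_mono mult_right_mono) auto
    also have "\<dots> \<le> \<epsilon> / real n"
      using e by (intro divide_right_mono) (auto simp: field_simps)
    finally show ?case .
  qed
qed

lemma pm1_iff: "v \<in> pm1 \<longleftrightarrow> v = -1 \<or> v = 1" by (simp add: pm1_def)
lemma cube_memD: "s \<in> cube m \<Longrightarrow> i < m \<Longrightarrow> s i = -1 \<or> s i = 1"
  unfolding cube_def using pm1_iff by (auto simp: PiE_iff)
lemma datasets_memD: "D \<in> datasets m n \<Longrightarrow> t < n \<Longrightarrow> fst (D t) \<in> pm1 \<and> snd (D t) \<in> cube m"
  by (simp add: datasets_def PiE_iff mem_Times_iff)

lemma finite_pm1[simp]: "finite pm1" by (simp add: pm1_def)
lemma finite_cube[simp]: "finite (cube m)" by (simp add: cube_def finite_PiE)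
lemma finite_datasets[simp]: "finite (datasets m n)" by (simp add: datasets_def finite_PiE)

lemma sum_split_pred0:
  fixes h :: "'a \<Rightarrow> real"
  assumes "finite X"
  shows "(\<Sum>x\<in>X. h x) = (\<Sum>x\<in>{x\<in>X. \<phi> x}. h x) + (\<Sum>x\<in>{x\<in>X. \<not> \<phi> x}. h x)"
proof -
  have "X = {x\<in>X. \<phi> x} \<union> {x\<in>X. \<not> \<phi> x}" by auto
  moreover have "(\<Sum>x\<in>{x\<in>X. \<phi> x} \<union> {x\<in>X. \<not> \<phi> x}. h x) = (\<Sum>x\<in>{x\<in>X. \<phi> x}. h x) + (\<Sum>x\<in>{x\<in>X. \<not> \<phi> x}. h x)"
    by (rule sum.union_disjoint) (use assms in auto)
  ultimately show ?thesis by simp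
qed

lemma sum_split_pred:
  fixes f :: "'a \<Rightarrow> real"
  assumes "finite X"
  shows "(\<Sum>x\<in>X. f x * g (\<phi> x)) = (\<Sum>x\<in>{x\<in>X. \<phi> x}. f x) * g True + (\<Sum>x\<in>{x\<in>X. \<not> \<phi> x}. f x) * g False"
proof -
  have "(\<Sum>x\<in>X. f x * g (\<phi> x)) = (\<Sum>x\<in>{x\<in>X. \<phi> x}. f x * g (\<phi> x)) + (\<Sum>x\<in>{x\<in>X. \<not> \<phi> x}. f x * g (\<phi> x))"
    by (rule sum_split_pred0[OF assms])
  also have "(\<Sum>x\<in>{x\<in>X. \<phi> x}. f x * g (\<phi> x)) = (\<Sum>x\<in>{x\<in>X. \<phi> x}. f x) * g True"
    by (simp add: sum_distrib_right)
  also have "(\<Sum>x\<in>{x\<in>X. \<not> \<phi> x}. f x * g (\<phi> x)) = (\<Sum>x\<in>{x\<in>X. \<not> \<phi> x}. f x) * g False"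
    by (simp add: sum_distrib_right)
  finally show ?thesis .
qed

lemma sum_compl_pred:
  fixes f :: "'a \<Rightarrow> real"
  assumes "finite X"
  shows "(\<Sum>x\<in>{x\<in>X. \<not> \<phi> x}. f x) = (\<Sum>x\<in>X. f x) - (\<Sum>x\<in>{x\<in>X. \<phi> x}. f x)"
  using sum_split_pred0[OF assms, of f \<phi>] by simp

lemma data_binom:
  fixes P :: "real \<Rightarrow> (nat \<Rightarrow> real) \<Rightarrow> real" and \<phi> :: "real \<times> (nat \<Rightarrow> real) \<Rightarrow> bool"
  assumes tot: "(\<Sum>x\<in>pm1 \<times> cube m. P (fst x) (snd x)) = 1"
    and q: "q = (\<Sum>x\<in>{x\<in>pm1 \<times> cube m. \<phi> x}. P (fst x) (snd x))"
  shows "(\<Sum>D\<in>datasets m n. pr_data P n D * F (card {t\<in>{..<n}. \<phi> (D t)})) = BS n q F"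
proof (induction n arbitrary: F)
  case 0
  have "datasets m 0 = {\<lambda>_. undefined}" by (simp add: datasets_def)
  then show ?case by (simp add: pr_data_def BS_0)
next
  case (Suc n)
  let ?X = "pm1 \<times> cube m"
  have fin: "finite ?X" by simp
  have ds: "datasets m (Suc n) = (\<lambda>(y, g). g(n := y)) ` (?X \<times> datasets m n)"
    unfolding datasets_def lessThan_Suc by (rule PiE_insert_eq)
  have inj: "inj_on (\<lambda>(y, g). g(n := y)) (?X \<times> datasets m n)"
    unfolding datasets_def using inj_combinator[of n "{..<n}" "\<lambda>_. ?X"] by simp
  have pd: "pr_data P (Suc n) (g(n := x)) = P (fst x) (snd x) * pr_data P n g" for g x
    unfolding pr_data_def by (simp add: prod.lessThan_Suc)
  have cd: "card {t\<in>{..<Suc n}. \<phi> ((g(n := x)) t)} = card {t\<in>{..<n}. \<phi> (g t)} + (if \<phi> x then 1 else 0)" for g x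
  proof -
    have "{t\<in>{..<Suc n}. \<phi> ((g(n := x)) t)} = {t\<in>{..<n}. \<phi> (g t)} \<union> (if \<phi> x then {n} else {})"
      by (auto simp: less_Suc_eq)
    then show ?thesis by (simp add: card_Un_disjoint)
  qed
  have "(\<Sum>D\<in>datasets m (Suc n). pr_data P (Suc n) D * F (card {t\<in>{..<Suc n}. \<phi> (D t)}))
      = (\<Sum>(x, g)\<in>?X \<times> datasets m n. P (fst x) (snd x) * pr_data P n g * F (card {t\<in>{..<n}. \<phi> (g t)} + (if \<phi> x then 1 else 0)))"
  proof -
    have each: "pr_data P (Suc n) (g(n := x)) * F (card {t\<in>{..<Suc n}. \<phi> ((g(n := x)) t)}) =
       P (fst x) (snd x) * pr_data P n g * F (card {t\<in>{..<n}. \<phi> (g t)} + (if \<phi> x then 1 else 0))" for x g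
      by (simp only: pd cd)
    show ?thesis unfolding ds
      by (subst sum.reindex[OF inj]) (simp only: comp_def case_prod_unfold each)
  qed
  also have "\<dots> = (\<Sum>x\<in>?X. P (fst x) (snd x) * (\<Sum>g\<in>datasets m n. pr_data P n g * F (card {t\<in>{..<n}. \<phi> (g t)} + (if \<phi> x then 1 else 0))))"
    by (simp add: sum.cartesian_product[symmetric] sum_distrib_left mult.assoc)
  also have "\<dots> = (\<Sum>x\<in>?X. P (fst x) (snd x) * BS n q (\<lambda>k. F (k + (if \<phi> x then 1 else 0))))"
  proof (intro sum.cong refl)
    fix x
    show "P (fst x) (snd x) * (\<Sum>g\<in>datasets m n. pr_data P n g * F (card {t\<in>{..<n}. \<phi> (g t)} + (if \<phi> x then 1 else 0)))
       = P (fst x) (snd x) * BS n q (\<lambda>k. F (k + (if \<phi> x then 1 else 0)))"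
      using Suc.IH[of "\<lambda>k. F (k + (if \<phi> x then 1 else 0))"] by simp
  qed
  also have "\<dots> = q * BS n q (\<lambda>k. F (k + 1)) + (1 - q) * BS n q F"
    using sum_split_pred[OF fin, where f="\<lambda>x. P (fst x) (snd x)" and g="\<lambda>b. BS n q (\<lambda>k. F (k + (if b then 1 else 0)))" and \<phi>=\<phi>]
      sum_compl_pred[OF fin, where \<phi>=\<phi> and f="\<lambda>x. P (fst x) (snd x)"] tot q
    by (simp add: mult.commute)
  also have "\<dots> = BS (Suc n) q F" by (simp add: BS_Suc)
  finally show ?case .
qed

lemma acc_est_count:
  assumes D: "D \<in> datasets m n" and i: "i < m" and n: "n > 0"
  shows "acc_est n D i = (2 * real (card {t\<in>{..<n}. snd (D t) i * fst (D t) = 1}) - real n) / real n"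
proof -
  have v: "snd (D t) i * fst (D t) \<in> {-1, 1}" if "t < n" for t
  proof -
    have "fst (D t) = -1 \<or> fst (D t) = 1" "snd (D t) i = -1 \<or> snd (D t) i = 1"
      using datasets_memD[OF D that] cube_memD[OF _ i] pm1_iff by auto
    then show ?thesis by auto
  qed
  have "(\<Sum>t<n. snd (D t) i * fst (D t)) = (\<Sum>t<n. 2 * (if snd (D t) i * fst (D t) = 1 then 1 else 0) - 1)"
  proof (intro sum.cong refl)
    fix t assume "t \<in> {..<n}"
    then have "snd (D t) i * fst (D t) \<in> {-1, 1}" using v by auto
    then show "snd (D t) i * fst (D t) = 2 * (if snd (D t) i * fst (D t) = 1 then 1 else 0) - 1"
      by auto
  qed
  also have "\<dots> = 2 * (\<Sum>t<n. (if snd (D t) i * fst (D t) = 1 then 1 else 0)) - real n"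
    by (simp add: sum_subtractf sum_distrib_left)
  also have "(\<Sum>t<n. (if snd (D t) i * fst (D t) = 1 then 1 else 0)) = real (card {t\<in>{..<n}. snd (D t) i * fst (D t) = 1})"
    using sum.inter_filter[of "{..<n}" "\<lambda>_. 1::real" "\<lambda>t. snd (D t) i * fst (D t) = 1"] by simp
  finally show ?thesis by (simp add: acc_est_def)
qed

lemma sum_prod_partition:
  fixes h :: "nat set \<Rightarrow> (nat \<Rightarrow> real) \<Rightarrow> real" and A :: "real set"
  assumes finF: "finite F" and finA: "finite A" and finI: "finite I"
    and disj: "\<And>b b'. b \<in> F \<Longrightarrow> b' \<in> F \<Longrightarrow> b \<noteq> b' \<Longrightarrow> b \<inter> b' = {}"
    and cover: "\<Union>F = I"
    and loc: "\<And>b s s'. b \<in> F \<Longrightarrow> (\<And>i. i \<in> b \<Longrightarrow> s i = s' i) \<Longrightarrow> h b s = h b s'"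
  shows "(\<Sum>s\<in>PiE I (\<lambda>_. A). \<Prod>b\<in>F. h b s) = (\<Prod>b\<in>F. \<Sum>t\<in>PiE b (\<lambda>_. A). h b t)"
proof -
  have finb: "finite (PiE b (\<lambda>_. A))" if "b \<in> F" for b
  proof -
    have "b \<subseteq> I" using cover that by auto
    then have "finite b" using finI finite_subset by blast
    then show ?thesis using finA by (simp add: finite_PiE)
  qed
  have rhs: "(\<Prod>b\<in>F. \<Sum>t\<in>PiE b (\<lambda>_. A). h b t) = (\<Sum>g\<in>PiE F (\<lambda>b. PiE b (\<lambda>_. A)). \<Prod>b\<in>F. h b (g b))"
    by (rule prod_sum_PiE[OF finF finb])
  define \<Phi> where "\<Phi> s = (\<lambda>b\<in>F. restrict s b)" for s :: "nat \<Rightarrow> real"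
  define blk where "blk i = (THE b. b \<in> F \<and> i \<in> b)" for i
  have blk: "blk i \<in> F \<and> i \<in> blk i" if iI: "i \<in> I" for i
  proof -
    obtain b where b: "b \<in> F" "i \<in> b" using cover iI by auto
    have "(THE b. b \<in> F \<and> i \<in> b) = b"
      using b disj by (intro the_equality) auto
    then show ?thesis using b by (simp add: blk_def)
  qed
  have blk_eq: "blk i = b" if "b \<in> F" "i \<in> b" for i b
  proof -
    have "i \<in> I" using cover that by auto
    then show ?thesis using blk[of i] disj that by blast
  qed
  define \<Psi> where "\<Psi> g = (\<lambda>i\<in>I. g (blk i) i)" for g :: "nat set \<Rightarrow> nat \<Rightarrow> real"
  have bij: "bij_betw \<Phi> (PiE I (\<lambda>_. A)) (PiE F (\<lambda>b. PiE b (\<lambda>_. A)))"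
  proof (rule bij_betw_byWitness[where f' = \<Psi>])
    show "\<forall>s\<in>PiE I (\<lambda>_. A). \<Psi> (\<Phi> s) = s"
    proof
      fix s assume s: "s \<in> PiE I (\<lambda>_. A)"
      show "\<Psi> (\<Phi> s) = s"
      proof
        fix i show "\<Psi> (\<Phi> s) i = s i"
          using blk[of i] s by (cases "i \<in> I") (auto simp: \<Psi>_def \<Phi>_def PiE_def extensional_def)
      qed
    qed
    show "\<forall>g\<in>PiE F (\<lambda>b. PiE b (\<lambda>_. A)). \<Phi> (\<Psi> g) = g"
    proof
      fix g assume g: "g \<in> PiE F (\<lambda>b. PiE b (\<lambda>_. A))"
      show "\<Phi> (\<Psi> g) = g"
      proof
        fix b show "\<Phi> (\<Psi> g) b = g b"
        proof (cases "b \<in> F")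
          case True
          have "restrict (\<Psi> g) b = g b"
          proof
            fix i show "restrict (\<Psi> g) b i = g b i"
            proof (cases "i \<in> b")
              case True
              then have "i \<in> I" using cover \<open>b \<in> F\<close> by auto
              then show ?thesis using True blk_eq[OF \<open>b \<in> F\<close> True] by (simp add: \<Psi>_def)
            next
              case False
              have "g b \<in> PiE b (\<lambda>_. A)" using g \<open>b \<in> F\<close> by auto
              then have "g b i = undefined" using False by (simp add: PiE_def extensional_def)
              then show ?thesis using False by simp
            qed
          qed
          then show ?thesis using True by (simp add: \<Phi>_def)
        next
          case False
          then show ?thesis using g by (simp add: \<Phi>_def PiE_def extensional_def)
        qed
      qed
    qed
    show "\<Phi> ` PiE I (\<lambda>_. A) \<subseteq> PiE F (\<lambda>b. PiE b (\<lambda>_. A))"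
    proof
      fix g assume "g \<in> \<Phi> ` PiE I (\<lambda>_. A)"
      then obtain s where s: "s \<in> PiE I (\<lambda>_. A)" and g: "g = \<Phi> s" by auto
      have "restrict s b \<in> PiE b (\<lambda>_. A)" if "b \<in> F" for b
      proof -
        have "b \<subseteq> I" using cover that by auto
        then show ?thesis using s by (auto simp: PiE_iff)
      qed
      then show "g \<in> PiE F (\<lambda>b. PiE b (\<lambda>_. A))" unfolding g \<Phi>_def by (auto simp: PiE_iff)
    qed
    show "\<Psi> ` PiE F (\<lambda>b. PiE b (\<lambda>_. A)) \<subseteq> PiE I (\<lambda>_. A)"
    proof
      fix s assume "s \<in> \<Psi> ` PiE F (\<lambda>b. PiE b (\<lambda>_. A))"
      then obtain g where g: "g \<in> PiE F (\<lambda>b. PiE b (\<lambda>_. A))" and s: "s = \<Psi> g" by auto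
      have "g (blk i) i \<in> A" if "i \<in> I" for i
      proof -
        have "g (blk i) \<in> PiE (blk i) (\<lambda>_. A)" using g blk[OF that] by auto
        then show ?thesis using blk[OF that] by (auto simp: PiE_iff)
      qed
      then show "s \<in> PiE I (\<lambda>_. A)" unfolding s \<Psi>_def by (auto simp: PiE_iff)
    qed
  qed
  have "(\<Sum>s\<in>PiE I (\<lambda>_. A). \<Prod>b\<in>F. h b s) = (\<Sum>s\<in>PiE I (\<lambda>_. A). \<Prod>b\<in>F. h b (\<Phi> s b))"
  proof (intro sum.cong refl prod.cong)
    fix s b assume "b \<in> F"
    then show "h b s = h b (\<Phi> s b)" by (intro loc) (auto simp: \<Phi>_def)
  qed
  also have "\<dots> = (\<Sum>g\<in>PiE F (\<lambda>b. PiE b (\<lambda>_. A)). \<Prod>b\<in>F. h b (g b))"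
    by (rule sum.reindex_bij_betw[OF bij, where g = "\<lambda>g. \<Prod>b\<in>F. h b (g b)"])
  finally show ?thesis using rhs by simp
qed

lemma sum_prod_partition_marg:
  fixes h :: "nat set \<Rightarrow> (nat \<Rightarrow> real) \<Rightarrow> real" and A :: "real set"
  assumes finF: "finite F" and finA: "finite A" and finI: "finite I"
    and disj: "\<And>b b'. b \<in> F \<Longrightarrow> b' \<in> F \<Longrightarrow> b \<noteq> b' \<Longrightarrow> b \<inter> b' = {}"
    and cover: "\<Union>F = I"
    and loc: "\<And>b s s'. b \<in> F \<Longrightarrow> (\<And>i. i \<in> b \<Longrightarrow> s i = s' i) \<Longrightarrow> h b s = h b s'"
    and b0: "b0 \<in> F" and s0: "s0 \<in> PiE I (\<lambda>_. A)"
  shows "(\<Sum>s\<in>{s\<in>PiE I (\<lambda>_. A). \<forall>i\<in>b0. s i = s0 i}. \<Prod>b\<in>F. h b s)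
       = h b0 s0 * (\<Prod>b\<in>F - {b0}. \<Sum>t\<in>PiE b (\<lambda>_. A). h b t)"
proof -
  define h' where "h' b s = (if b = b0 then (if (\<forall>i\<in>b0. s i = s0 i) then h b s else 0) else h b s)" for b s
  have loc': "h' b s = h' b s'" if "b \<in> F" "\<And>i. i \<in> b \<Longrightarrow> s i = s' i" for b s s'
  proof -
    have hh: "h b s = h b s'" using that(2) by (intro loc[OF that(1)]) auto
    show ?thesis
    proof (cases "b = b0")
      case True
      then have "(\<forall>i\<in>b0. s i = s0 i) = (\<forall>i\<in>b0. s' i = s0 i)" using that(2) by auto
      then show ?thesis unfolding h'_def using hh True by simp
    next
      case False then show ?thesis unfolding h'_def using hh by simp
    qed
  qed
  have fin: "finite (PiE I (\<lambda>_. A))" using finI finA by (simp add: finite_PiE)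
  have "(\<Sum>s\<in>{s\<in>PiE I (\<lambda>_. A). \<forall>i\<in>b0. s i = s0 i}. \<Prod>b\<in>F. h b s)
      = (\<Sum>s\<in>PiE I (\<lambda>_. A). if (\<forall>i\<in>b0. s i = s0 i) then (\<Prod>b\<in>F. h b s) else 0)"
    by (rule sum.inter_filter[OF fin])
  also have "\<dots> = (\<Sum>s\<in>PiE I (\<lambda>_. A). \<Prod>b\<in>F. h' b s)"
  proof (intro sum.cong refl)
    fix s
    have "(\<Prod>b\<in>F. h' b s) = h' b0 s * (\<Prod>b\<in>F - {b0}. h' b s)"
      using b0 finF by (simp add: prod.remove)
    also have "(\<Prod>b\<in>F - {b0}. h' b s) = (\<Prod>b\<in>F - {b0}. h b s)"
      by (intro prod.cong) (auto simp: h'_def)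
    also have "(\<Prod>b\<in>F. h b s) = h b0 s * (\<Prod>b\<in>F - {b0}. h b s)"
      using b0 finF by (simp add: prod.remove)
    ultimately show "(if (\<forall>i\<in>b0. s i = s0 i) then (\<Prod>b\<in>F. h b s) else 0) = (\<Prod>b\<in>F. h' b s)"
      by (simp add: h'_def)
  qed
  also have "\<dots> = (\<Prod>b\<in>F. \<Sum>t\<in>PiE b (\<lambda>_. A). h' b t)"
    by (rule sum_prod_partition[OF finF finA finI disj cover loc'])
  also have "\<dots> = (\<Sum>t\<in>PiE b0 (\<lambda>_. A). h' b0 t) * (\<Prod>b\<in>F - {b0}. \<Sum>t\<in>PiE b (\<lambda>_. A). h' b t)"
    using b0 finF by (simp add: prod.remove)
  also have "(\<Prod>b\<in>F - {b0}. \<Sum>t\<in>PiE b (\<lambda>_. A). h' b t) = (\<Prod>b\<in>F - {b0}. \<Sum>t\<in>PiE b (\<lambda>_. A). h b t)"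
    by (intro prod.cong refl sum.cong) (auto simp: h'_def)
  also have "(\<Sum>t\<in>PiE b0 (\<lambda>_. A). h' b0 t) = h b0 s0"
  proof -
    have b0I: "b0 \<subseteq> I" using cover b0 by auto
    have r: "restrict s0 b0 \<in> PiE b0 (\<lambda>_. A)" using s0 b0I by (auto simp: PiE_iff)
    have "(\<Sum>t\<in>PiE b0 (\<lambda>_. A). h' b0 t) = (\<Sum>t\<in>PiE b0 (\<lambda>_. A). if t = restrict s0 b0 then h b0 t else 0)"
    proof (intro sum.cong refl)
      fix t assume t: "t \<in> PiE b0 (\<lambda>_. A)"
      have "(\<forall>i\<in>b0. t i = s0 i) \<longleftrightarrow> t = restrict s0 b0"
      proof
        assume "\<forall>i\<in>b0. t i = s0 i"
        then show "t = restrict s0 b0" using t by (auto simp: PiE_def extensional_def)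
      qed auto
      then show "h' b0 t = (if t = restrict s0 b0 then h b0 t else 0)" by (simp add: h'_def)
    qed
    also have "\<dots> = h b0 (restrict s0 b0)"
    proof -
      have "finite b0" using b0I finI finite_subset by blast
      then have "finite (PiE b0 (\<lambda>_. A))" using finA by (simp add: finite_PiE)
      then show ?thesis using r by (simp add: sum.delta)
    qed
    also have "\<dots> = h b0 s0" by (rule loc[OF b0]) simp
    finally show ?thesis .
  qed
  finally show ?thesis .
qed

lemma sum_pm1: "(\<Sum>y\<in>pm1. f y) = f (-1) + f 1"
  by (simp add: pm1_def)

locale ising_ctx =
  fixes m :: nat and thY :: real and th :: "nat \<Rightarrow> real"
    and E :: "nat set set" and thE :: "nat set \<Rightarrow> real"
  assumes pairs: "\<forall>e\<in>E. e \<subseteq> {..<m} \<and> card e = 2"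
    and disjoint: "\<forall>e\<in>E. \<forall>e'\<in>E. e \<noteq> e' \<longrightarrow> e \<inter> e' = {}"
begin

abbreviation P where "P \<equiv> ising m thY th E thE"
abbreviation \<kappa> where "\<kappa> \<equiv> exp (- 2 * thY)"

lemma finE: "finite E"
proof -
  have "E \<subseteq> Pow {..<m}" using pairs by auto
  then show ?thesis by (rule finite_subset) simp
qed

lemma e_props:
  assumes "e \<in> E"
  shows "e = {Min e, Max e}" "Min e \<noteq> Max e" "Min e < m" "Max e < m" "finite e" "e \<subseteq> {..<m}"
proof -
  have c: "card e = 2" and sub: "e \<subseteq> {..<m}" using pairs assms by auto
  then obtain x y where xy: "e = {x, y}" "x \<noteq> y" by (auto simp: card_2_iff)
  have "Min e = min x y" "Max e = max x y" using xy by auto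
  then show "e = {Min e, Max e}" "Min e \<noteq> Max e" using xy by (auto simp: min_def max_def)
  show "Min e < m" "Max e < m" using sub xy \<open>Min e = min x y\<close> \<open>Max e = max x y\<close> by (auto simp: min_def max_def)
  show "finite e" using xy by simp
  show "e \<subseteq> {..<m}" by (rule sub)
qed

lemma cube_ne: "restrict (\<lambda>_. 1) {..<m} \<in> cube m"
  by (simp add: cube_def pm1_def PiE_iff)

lemma cube_nonempty: "cube m \<noteq> {}" using cube_ne by auto

lemma Z_pos: "ising_Z m thY th E thE > 0"
  unfolding ising_Z_def
  by (intro sum_pos) (use cube_nonempty in \<open>auto simp: pm1_def\<close>)

lemma P_pos: "P y s > 0"
  using Z_pos by (simp add: ising_def)

lemma tot: "(\<Sum>y\<in>pm1. \<Sum>s\<in>cube m. P y s) = 1"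
proof -
  have "(\<Sum>y\<in>pm1. \<Sum>s\<in>cube m. P y s) = (\<Sum>y\<in>pm1. \<Sum>s\<in>cube m. exp (ising_energy m thY th E thE y s)) / ising_Z m thY th E thE"
    by (simp add: ising_def sum_divide_distrib)
  also have "\<dots> = 1" using Z_pos by (simp add: ising_Z_def)
  finally show ?thesis .
qed

lemma tot_pair: "(\<Sum>x\<in>pm1 \<times> cube m. P (fst x) (snd x)) = 1"
  using tot by (simp add: sum.cartesian_product case_prod_beta)

lemma prY_pos: "prY P m y > 0"
  unfolding prY_def by (intro sum_pos) (use cube_nonempty P_pos in auto)

lemma prLam_pos: "prLam P s > 0"
  unfolding prLam_def by (intro sum_pos) (use P_pos in \<open>auto simp: pm1_def\<close>)

lemma prY_le1: assumes "y \<in> pm1" shows "prY P m y \<le> 1"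
proof -
  have "prY P m y \<le> (\<Sum>y\<in>pm1. prY P m y)"
    using assms prY_pos by (intro member_le_sum) (auto intro: less_imp_le)
  also have "\<dots> = 1" using tot by (simp add: prY_def)
  finally show ?thesis .
qed

lemma prY_sum: "prY P m (-1) + prY P m 1 = 1"
  using tot by (simp add: prY_def sum_pm1)

definition negc :: "(nat \<Rightarrow> real) \<Rightarrow> (nat \<Rightarrow> real)" where
  "negc s = restrict (\<lambda>k. - s k) {..<m}"

lemma negc_cube: "s \<in> cube m \<Longrightarrow> negc s \<in> cube m"
  unfolding negc_def cube_def by (auto simp: PiE_iff pm1_iff)

lemma negc_negc: "s \<in> cube m \<Longrightarrow> negc (negc s) = s"
  unfolding negc_def cube_def by (auto simp: PiE_iff extensional_def fun_eq_iff)

lemma energy_neg: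
  assumes s: "s \<in> cube m"
  shows "ising_energy m thY th E thE (-1) (negc s) = ising_energy m thY th E thE 1 s - 2 * thY"
proof -
  have a: "(\<Sum>i<m. th i * negc s i * (-1)) = (\<Sum>i<m. th i * s i * 1)"
    by (intro sum.cong) (auto simp: negc_def)
  have b: "(\<Prod>i\<in>e. negc s i) = (\<Prod>i\<in>e. s i)" if "e \<in> E" for e
  proof -
    have "(\<Prod>i\<in>e. negc s i) = (\<Prod>i\<in>e. (-1) * s i)"
      using e_props[OF that] by (intro prod.cong) (auto simp: negc_def)
    also have "\<dots> = (\<Prod>i\<in>e. (-1::real)) * (\<Prod>i\<in>e. s i)" by (rule prod.distrib)
    also have "(\<Prod>i\<in>e. (-1::real)) = (-1) ^ card e" by simp
    also have "card e = 2" using pairs that by auto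
    finally show ?thesis by simp
  qed
  have c: "(\<Sum>e\<in>E. thE e * (\<Prod>i\<in>e. negc s i)) = (\<Sum>e\<in>E. thE e * (\<Prod>i\<in>e. s i))"
    using b by (intro sum.cong) auto
  show ?thesis unfolding ising_energy_def a c by simp
qed

lemma P_neg: "s \<in> cube m \<Longrightarrow> P (-1) (negc s) = \<kappa> * P 1 s"
  unfolding ising_def by (simp add: energy_neg exp_diff exp_minus field_simps)

lemma sum_neg:
  "(\<Sum>s\<in>{s\<in>cube m. Q s}. P (-1) s) = \<kappa> * (\<Sum>s\<in>{s\<in>cube m. Q (negc s)}. P 1 s)"
proof -
  have bij: "bij_betw negc {s\<in>cube m. Q (negc s)} {s\<in>cube m. Q s}"
    by (rule bij_betw_byWitness[where f' = negc]) (auto simp: negc_negc negc_cube)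
  have "(\<Sum>s\<in>{s\<in>cube m. Q s}. P (-1) s) = (\<Sum>s\<in>{s\<in>cube m. Q (negc s)}. P (-1) (negc s))"
    by (rule sum.reindex_bij_betw[OF bij, symmetric])
  also have "\<dots> = (\<Sum>s\<in>{s\<in>cube m. Q (negc s)}. \<kappa> * P 1 s)"
    by (intro sum.cong) (auto simp: P_neg)
  finally show ?thesis by (simp add: sum_distrib_left)
qed

lemma prY_neg: "prY P m (-1) = \<kappa> * prY P m 1"
  using sum_neg[of "\<lambda>_. True"] by (simp add: prY_def)

lemma pr1_neg: assumes "i < m" shows "pr1 P m i (-1) (-a) = \<kappa> * pr1 P m i 1 a"
proof -
  have "{s\<in>cube m. (negc s) i = -a} = {s\<in>cube m. s i = a}"
    using assms by (auto simp: negc_def)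
  then show ?thesis using sum_neg[of "\<lambda>s. s i = -a"] by (simp add: pr1_def)
qed

lemma pr1_split: assumes "i < m" shows "pr1 P m i y 1 + pr1 P m i y (-1) = prY P m y"
proof -
  have "{s\<in>cube m. \<not> s i = 1} = {s\<in>cube m. s i = -1}"
    using cube_memD[OF _ assms] by force
  then show ?thesis
    using sum_split_pred0[of "cube m" "P y" "\<lambda>s. s i = 1"] by (simp add: pr1_def prY_def)
qed

lemma pr1_pos: assumes "i < m" "a \<in> pm1" shows "pr1 P m i y a > 0"
proof -
  have "restrict (\<lambda>k. if k = i then a else 1) {..<m} \<in> {s\<in>cube m. s i = a}"
    using assms by (auto simp: cube_def PiE_iff pm1_iff)
  then have "{s\<in>cube m. s i = a} \<noteq> {}" by auto
  then show ?thesis unfolding pr1_def by (intro sum_pos) (use P_pos in auto)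
qed

definition pp :: "nat \<Rightarrow> real" where
  "pp i = (\<Sum>x\<in>{x\<in>pm1 \<times> cube m. snd x i * fst x = 1}. P (fst x) (snd x))"

lemma pp_eq0: assumes "i < m" shows "pp i = pr1 P m i (-1) (-1) + pr1 P m i 1 1"
proof -
  have "pp i = (\<Sum>x\<in>pm1 \<times> cube m. if snd x i * fst x = 1 then P (fst x) (snd x) else 0)"
    unfolding pp_def by (rule sum.inter_filter) simp
  also have "\<dots> = (\<Sum>y\<in>pm1. \<Sum>s\<in>cube m. if s i * y = 1 then P y s else 0)"
    by (simp add: sum.cartesian_product case_prod_beta)
  also have "\<dots> = (\<Sum>s\<in>cube m. if s i = -1 then P (-1) s else 0) + (\<Sum>s\<in>cube m. if s i = 1 then P 1 s else 0)"
  proof -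
    have "(\<lambda>s. if s i * (-1) = 1 then P (-1) s else 0) = (\<lambda>s. if s i = -1 then P (-1) s else 0)"
      by (auto simp: fun_eq_iff)
    then show ?thesis by (simp add: sum_pm1)
  qed
  also have "\<dots> = pr1 P m i (-1) (-1) + pr1 P m i 1 1"
    unfolding pr1_def by (simp add: sum.inter_filter)
  finally show ?thesis .
qed

lemma pp_eq: assumes "i < m" shows "pp i = pr1 P m i 1 1 / prY P m 1"
proof -
  have k: "\<kappa> > 0" by simp
  have "pp i = (1 + \<kappa>) * pr1 P m i 1 1"
    using pp_eq0[OF assms] pr1_neg[OF assms, of 1] by (simp add: algebra_simps)
  moreover have "(1 + \<kappa>) * prY P m 1 = 1"
    using prY_sum prY_neg by (simp add: algebra_simps)
  moreover have "prY P m 1 > 0" by (rule prY_pos)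
  ultimately have "1 + \<kappa> = 1 / prY P m 1" by (simp add: field_simps)
  then show ?thesis using \<open>pp i = (1 + \<kappa>) * pr1 P m i 1 1\<close> by simp
qed

lemma pp_bounds: assumes "i < m" shows "0 < pp i" "pp i < 1"
proof -
  show "0 < pp i" using pp_eq[OF assms] pr1_pos[OF assms, of 1 1] prY_pos[of 1] by (simp add: pm1_def)
  have "pr1 P m i 1 1 < prY P m 1"
    using pr1_split[OF assms, of 1] pr1_pos[OF assms, of "-1" 1] by (simp add: pm1_def)
  then show "pp i < 1" using pp_eq[OF assms] prY_pos[of 1] by simp
qed

lemma cond1:
  assumes i: "i < m" and y: "y \<in> pm1" and a: "a \<in> pm1"
  shows "pr1 P m i y a / prY P m y = (if a * y = 1 then pp i else 1 - pp i)"
proof -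
  have k: "\<kappa> > 0" by simp
  have Y1: "prY P m 1 > 0" by (rule prY_pos)
  have s1: "pr1 P m i 1 (-1) = prY P m 1 - pr1 P m i 1 1" using pr1_split[OF i, of 1] by simp
  consider "y = 1" "a = 1" | "y = 1" "a = -1" | "y = -1" "a = 1" | "y = -1" "a = -1"
    using y a by (auto simp: pm1_iff)
  then show ?thesis
  proof cases
    case 1 then show ?thesis using pp_eq[OF i] by simp
  next
    case 2 then show ?thesis using pp_eq[OF i] Y1 s1 by (simp add: field_simps)
  next
    case 3
    have "pr1 P m i (-1) 1 = \<kappa> * pr1 P m i 1 (-1)" using pr1_neg[OF i, of "-1"] by simp
    then have "pr1 P m i (-1) 1 / prY P m (-1) = (\<kappa> * (prY P m 1 - pr1 P m i 1 1)) / (\<kappa> * prY P m 1)"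
      using s1 prY_neg by simp
    also have "\<dots> = 1 - pr1 P m i 1 1 / prY P m 1" using k Y1 by (simp add: field_simps)
    finally show ?thesis using 3 pp_eq[OF i] by simp
  next
    case 4
    have "pr1 P m i (-1) (-1) = \<kappa> * pr1 P m i 1 1" using pr1_neg[OF i, of 1] by simp
    then show ?thesis using 4 pp_eq[OF i] Y1 prY_neg k by (simp add: field_simps)
  qed
qed

lemma ent_term:
  assumes i: "i < m"
  shows "(\<Sum>y\<in>pm1. \<Sum>s\<in>cube m. P y s * ln (pr1 P m i y (s i) / prY P m y)) = - Hb (pp i)"
proof -
  have fin: "finite (pm1 \<times> cube m)" by simp
  have ppd: "(\<Sum>x\<in>{x\<in>pm1 \<times> cube m. snd x i * fst x = 1}. P (fst x) (snd x)) = pp i" by (simp add: pp_def)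
  have "(\<Sum>y\<in>pm1. \<Sum>s\<in>cube m. P y s * ln (pr1 P m i y (s i) / prY P m y))
      = (\<Sum>x\<in>pm1 \<times> cube m. P (fst x) (snd x) * ln (pr1 P m i (fst x) (snd x i) / prY P m (fst x)))"
    by (simp add: sum.cartesian_product case_prod_beta)
  also have "\<dots> = (\<Sum>x\<in>pm1 \<times> cube m. P (fst x) (snd x) * (\<lambda>b. ln (if b then pp i else 1 - pp i)) (snd x i * fst x = 1))"
  proof (intro sum.cong refl)
    fix x assume x: "x \<in> pm1 \<times> cube m"
    then have "snd x i \<in> pm1" using cube_memD[of "snd x" m i] i by (auto simp: pm1_iff)
    then show "P (fst x) (snd x) * ln (pr1 P m i (fst x) (snd x i) / prY P m (fst x)) =
        P (fst x) (snd x) * (\<lambda>b. ln (if b then pp i else 1 - pp i)) (snd x i * fst x = 1)"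
      using cond1[OF i, of "fst x" "snd x i"] x by auto
  qed
  also have "\<dots> = pp i * ln (pp i) + (1 - pp i) * ln (1 - pp i)"
    using sum_split_pred[OF fin, where f = "\<lambda>x. P (fst x) (snd x)" and g = "\<lambda>b. ln (if b then pp i else 1 - pp i)"
        and \<phi> = "\<lambda>x. snd x i * fst x = 1"]
      sum_compl_pred[OF fin, where f = "\<lambda>x. P (fst x) (snd x)" and \<phi> = "\<lambda>x. snd x i * fst x = 1"]
      tot_pair ppd
    by (simp only: ppd) (simp add: algebra_simps)
  finally show ?thesis by (simp add: Hb_def)
qed

end

context ising_ctx
begin

definition U :: "nat set" where "U = {..<m} - \<Union>E"
definition FF :: "nat set set" where "FF = E \<union> (\<lambda>i. {i}) ` U"
definition hb :: "nat set \<Rightarrow> real \<Rightarrow> (nat \<Rightarrow> real) \<Rightarrow> real" where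
  "hb b y s = exp ((\<Sum>i\<in>b. th i * s i * y) + (if b \<in> E then thE b * (\<Prod>k\<in>b. s k) else 0))"
definition NN :: "nat set \<Rightarrow> real \<Rightarrow> real" where
  "NN b y = (\<Sum>t\<in>PiE b (\<lambda>_. pm1). hb b y t)"
definition cc :: "real \<Rightarrow> real" where
  "cc y = exp (thY * y) / ising_Z m thY th E thE"
definition marg :: "nat set \<Rightarrow> real \<Rightarrow> (nat \<Rightarrow> real) \<Rightarrow> real" where
  "marg b y s0 = (\<Sum>s\<in>{s\<in>cube m. \<forall>i\<in>b. s i = s0 i}. P y s)"

lemma single_notin_E: "{i} \<notin> E"
  using pairs by fastforce

lemma finU: "finite U" by (simp add: U_def)
lemma finFF: "finite FF" using finE finU by (simp add: FF_def)

lemma FF_disj: "b \<in> FF \<Longrightarrow> b' \<in> FF \<Longrightarrow> b \<noteq> b' \<Longrightarrow> b \<inter> b' = {}"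
  using disjoint unfolding FF_def U_def by fastforce

lemma FF_cover: "\<Union>FF = {..<m}"
  using pairs unfolding FF_def U_def by auto

lemma FF_sub: "b \<in> FF \<Longrightarrow> b \<subseteq> {..<m}"
  using FF_cover by auto

lemma FF_fin: "b \<in> FF \<Longrightarrow> finite b"
  using FF_sub finite_subset by blast

lemma hb_loc: "b \<in> FF \<Longrightarrow> (\<And>i. i \<in> b \<Longrightarrow> s i = s' i) \<Longrightarrow> hb b y s = hb b y s'"
  unfolding hb_def by (simp cong: sum.cong prod.cong)

lemma hb_pos: "hb b y s > 0" by (simp add: hb_def)

lemma NN_pos: assumes "b \<in> FF" shows "NN b y > 0"
proof -
  have "restrict (\<lambda>_. 1) b \<in> PiE b (\<lambda>_. pm1)" by (simp add: PiE_iff pm1_def)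
  then have "PiE b (\<lambda>_. pm1) \<noteq> {}" by (metis empty_iff)
  moreover have "finite (PiE b (\<lambda>_. pm1))" using FF_fin[OF assms] by (simp add: finite_PiE)
  ultimately show ?thesis unfolding NN_def by (intro sum_pos) (auto simp: hb_pos)
qed

lemma sum_over_FF: "(\<Sum>i<m. f i) = (\<Sum>b\<in>FF. \<Sum>i\<in>b. f i)"
proof -
  have "(\<Sum>i<m. f i) = sum f (\<Union>FF)" by (simp add: FF_cover)
  also have "\<dots> = (sum \<circ> sum) f FF"
    by (rule sum.Union_disjoint) (use FF_fin FF_disj in auto)
  finally show ?thesis by simp
qed

lemma sum_E_FF: "(\<Sum>e\<in>E. g e) = (\<Sum>b\<in>FF. if b \<in> E then g b else 0)"
proof -
  have "(\<Sum>b\<in>FF. if b \<in> E then g b else 0) = sum g (FF \<inter> E)"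
    by (simp add: sum.inter_restrict finFF)
  also have "FF \<inter> E = E" by (auto simp: FF_def)
  finally show ?thesis by simp
qed

lemma exp_energy: "exp (ising_energy m thY th E thE y s) = exp (thY * y) * (\<Prod>b\<in>FF. hb b y s)"
proof -
  have "ising_energy m thY th E thE y s = thY * y + (\<Sum>b\<in>FF. (\<Sum>i\<in>b. th i * s i * y) + (if b \<in> E then thE b * (\<Prod>k\<in>b. s k) else 0))"
    unfolding ising_energy_def sum_over_FF[of "\<lambda>i. th i * s i * y"] sum_E_FF[of "\<lambda>e. thE e * (\<Prod>i\<in>e. s i)"]
    by (simp add: sum.distrib)
  then show ?thesis by (simp add: exp_add exp_sum[OF finFF] hb_def)
qed

lemma P_fact: "P y s = cc y * (\<Prod>b\<in>FF. hb b y s)"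
  unfolding ising_def cc_def exp_energy by simp

lemma cube_eq: "cube m = PiE {..<m} (\<lambda>_. pm1)" by (simp add: cube_def)

lemma prY_fact: "prY P m y = cc y * (\<Prod>b\<in>FF. NN b y)"
proof -
  have "prY P m y = cc y * (\<Sum>s\<in>PiE {..<m} (\<lambda>_. pm1). \<Prod>b\<in>FF. hb b y s)"
    unfolding prY_def P_fact cube_eq by (simp add: sum_distrib_left)
  also have "(\<Sum>s\<in>PiE {..<m} (\<lambda>_. pm1). \<Prod>b\<in>FF. hb b y s) = (\<Prod>b\<in>FF. NN b y)"
    unfolding NN_def
    by (rule sum_prod_partition[OF finFF _ _ FF_disj FF_cover]) (auto intro: hb_loc)
  finally show ?thesis .
qed

lemma marg_fact:
  assumes b0: "b0 \<in> FF" and s0: "s0 \<in> cube m"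
  shows "marg b0 y s0 = cc y * (hb b0 y s0 * (\<Prod>b\<in>FF - {b0}. NN b y))"
proof -
  have "marg b0 y s0 = cc y * (\<Sum>s\<in>{s\<in>PiE {..<m} (\<lambda>_. pm1). \<forall>i\<in>b0. s i = s0 i}. \<Prod>b\<in>FF. hb b y s)"
    unfolding marg_def P_fact cube_eq by (simp add: sum_distrib_left)
  also have "(\<Sum>s\<in>{s\<in>PiE {..<m} (\<lambda>_. pm1). \<forall>i\<in>b0. s i = s0 i}. \<Prod>b\<in>FF. hb b y s)
      = hb b0 y s0 * (\<Prod>b\<in>FF - {b0}. NN b y)"
    unfolding NN_def
    by (rule sum_prod_partition_marg[OF finFF _ _ FF_disj FF_cover _ b0 s0[unfolded cube_eq]])
       (auto intro: hb_loc)
  finally show ?thesis .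
qed

lemma cc_pos: "cc y > 0" using Z_pos by (simp add: cc_def)

lemma marg_ratio:
  assumes b0: "b0 \<in> FF" and s0: "s0 \<in> cube m"
  shows "marg b0 y s0 / prY P m y = hb b0 y s0 / NN b0 y"
proof -
  have "(\<Prod>b\<in>FF. NN b y) = NN b0 y * (\<Prod>b\<in>FF - {b0}. NN b y)"
    using b0 finFF by (simp add: prod.remove)
  moreover have "(\<Prod>b\<in>FF - {b0}. NN b y) > 0" using NN_pos by (intro prod_pos) auto
  ultimately show ?thesis
    unfolding marg_fact[OF assms] prY_fact using cc_pos[of y] NN_pos[OF b0, of y] by (simp add: field_simps)
qed

lemma P_ratio:
  assumes s0: "s0 \<in> cube m"
  shows "P y s0 / prY P m y = (\<Prod>b\<in>FF. marg b y s0 / prY P m y)"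
proof -
  have "P y s0 / prY P m y = (\<Prod>b\<in>FF. hb b y s0) / (\<Prod>b\<in>FF. NN b y)"
    unfolding P_fact prY_fact using cc_pos[of y] by simp
  also have "\<dots> = (\<Prod>b\<in>FF. hb b y s0 / NN b y)" by (simp add: prod_dividef)
  also have "\<dots> = (\<Prod>b\<in>FF. marg b y s0 / prY P m y)"
    by (intro prod.cong refl) (simp add: marg_ratio[OF _ s0])
  finally show ?thesis .
qed

lemma prod_FF: "(\<Prod>b\<in>FF. f b) = (\<Prod>e\<in>E. f e) * (\<Prod>i\<in>U. f {i})"
proof -
  have "(\<Prod>b\<in>FF. f b) = (\<Prod>e\<in>E. f e) * (\<Prod>b\<in>(\<lambda>i. {i}) ` U. f b)"
    unfolding FF_def by (rule prod.union_disjoint) (use finE finU single_notin_E in auto)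
  also have "(\<Prod>b\<in>(\<lambda>i. {i}) ` U. f b) = (\<Prod>i\<in>U. f {i})"
    by (rule prod.reindex_cong[where l = "\<lambda>i. {i}"]) (auto simp: inj_on_def)
  finally show ?thesis .
qed

lemma marg_pr2:
  assumes e: "e \<in> E"
  shows "marg e y s0 = pr2 P m (Min e) (Max e) y (s0 (Min e)) (s0 (Max e))"
proof -
  have "{s\<in>cube m. \<forall>i\<in>e. s i = s0 i} = {s\<in>cube m. s (Min e) = s0 (Min e) \<and> s (Max e) = s0 (Max e)}"
    using e_props(1)[OF e] by (metis (no_types, lifting) insert_iff singletonD)
  then show ?thesis by (simp add: marg_def pr2_def)
qed

lemma marg_pr1:
  shows "marg {i} y s0 = pr1 P m i y (s0 i)"
  by (simp add: marg_def pr1_def)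

lemma marg_pos: assumes "s0 \<in> cube m" shows "marg b y s0 > 0"
  unfolding marg_def by (intro sum_pos) (use assms P_pos in auto)

lemma U_lt: "i \<in> U \<Longrightarrow> i < m" by (simp add: U_def)

lemma ln_P_ratio:
  assumes s0: "s0 \<in> cube m"
  shows "ln (P y s0) - ln (prY P m y) =
    (\<Sum>e\<in>E. ln (pr2 P m (Min e) (Max e) y (s0 (Min e)) (s0 (Max e)) / prY P m y))
    + (\<Sum>i\<in>U. ln (pr1 P m i y (s0 i) / prY P m y))"
proof -
  have "ln (P y s0) - ln (prY P m y) = ln (P y s0 / prY P m y)"
    using P_pos[of y s0] prY_pos[of y] by (simp add: ln_div)
  also have "\<dots> = ln ((\<Prod>e\<in>E. marg e y s0 / prY P m y) * (\<Prod>i\<in>U. marg {i} y s0 / prY P m y))"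
    unfolding P_ratio[OF s0] prod_FF ..
  also have "\<dots> = (\<Sum>e\<in>E. ln (marg e y s0 / prY P m y)) + (\<Sum>i\<in>U. ln (marg {i} y s0 / prY P m y))"
  proof -
    have mz: "marg b y s0 / prY P m y > 0" for b using marg_pos[OF s0] prY_pos[of y] by simp
    then have "(\<Prod>e\<in>E. marg e y s0 / prY P m y) > 0" "(\<Prod>i\<in>U. marg {i} y s0 / prY P m y) > 0"
      by (auto intro: prod_pos)
    then have "ln ((\<Prod>e\<in>E. marg e y s0 / prY P m y) * (\<Prod>i\<in>U. marg {i} y s0 / prY P m y))
       = ln (\<Prod>e\<in>E. marg e y s0 / prY P m y) + ln (\<Prod>i\<in>U. marg {i} y s0 / prY P m y)"
      by (intro ln_mult_pos)
    moreover have ne: "marg b y s0 / prY P m y \<noteq> 0" for b using mz[of b] by linarith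
    moreover have "ln (\<Prod>e\<in>E. marg e y s0 / prY P m y) = (\<Sum>e\<in>E. ln (marg e y s0 / prY P m y))"
      by (rule ln_prod[OF finE ne])
    moreover have "ln (\<Prod>i\<in>U. marg {i} y s0 / prY P m y) = (\<Sum>i\<in>U. ln (marg {i} y s0 / prY P m y))"
      by (rule ln_prod[OF finU ne])
    ultimately show ?thesis by simp
  qed
  also have "\<dots> = (\<Sum>e\<in>E. ln (pr2 P m (Min e) (Max e) y (s0 (Min e)) (s0 (Max e)) / prY P m y))
    + (\<Sum>i\<in>U. ln (pr1 P m i y (s0 i) / prY P m y))"
    by (simp add: marg_pr2 marg_pr1 cong: sum.cong)
  finally show ?thesis .
qed

lemma sum_lt_m: "(\<Sum>i<m. g i) = (\<Sum>e\<in>E. g (Min e) + g (Max e)) + (\<Sum>i\<in>U. g i)"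
proof -
  have fU: "finite (\<Union>E)" using finE e_props(5) by auto
  have eqm: "{..<m} = \<Union>E \<union> U" using pairs by (auto simp: U_def)
  have dj: "\<Union>E \<inter> U = {}" by (auto simp: U_def)
  have "(\<Sum>i<m. g i) = sum g (\<Union>E \<union> U)" by (subst eqm) (rule refl)
  also have "\<dots> = sum g (\<Union>E) + sum g U" by (rule sum.union_disjoint[OF fU finU dj])
  also have "sum g (\<Union>E) = (\<Sum>e\<in>E. sum g e)"
    using sum.Union_disjoint[of E g] e_props(5) disjoint by auto
  also have "(\<Sum>e\<in>E. sum g e) = (\<Sum>e\<in>E. g (Min e) + g (Max e))"
  proof (intro sum.cong refl)
    fix e assume e: "e \<in> E"
    have "sum g e = sum g {Min e, Max e}" using e_props(1)[OF e] by simp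
    also have "\<dots> = g (Min e) + g (Max e)" using e_props(2)[OF e] by simp
    finally show "sum g e = g (Min e) + g (Max e)" .
  qed
  finally show ?thesis .
qed

end

context ising_ctx
begin

definition Rf :: "nat \<Rightarrow> nat \<Rightarrow> real \<Rightarrow> real \<Rightarrow> real \<Rightarrow> real" where
  "Rf i j y a b = ln ((pr2 P m i j y a b / prY P m y) / ((pr1 P m i y a / prY P m y) * (pr1 P m j y b / prY P m y)))"

lemma cmi_sum:
  assumes i: "i < m" and j: "j < m"
  shows "cmi P m i j = (\<Sum>y\<in>pm1. \<Sum>s\<in>cube m. P y s * Rf i j y (s i) (s j))"
proof -
  have "(\<Sum>a\<in>pm1. \<Sum>b\<in>pm1. pr2 P m i j y a b * Rf i j y a b) = (\<Sum>s\<in>cube m. P y s * Rf i j y (s i) (s j))" for y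
  proof -
    define G where "G ab = (\<Sum>s\<in>{s\<in>cube m. (s i, s j) = ab}. P y s * Rf i j y (s i) (s j))" for ab
    have "(\<Sum>a\<in>pm1. \<Sum>b\<in>pm1. pr2 P m i j y a b * Rf i j y a b) = (\<Sum>a\<in>pm1. \<Sum>b\<in>pm1. G (a, b))"
    proof (intro sum.cong refl)
      fix a b
      have "pr2 P m i j y a b * Rf i j y a b = (\<Sum>s\<in>{s\<in>cube m. (s i, s j) = (a, b)}. P y s * Rf i j y a b)"
        unfolding pr2_def by (simp add: sum_distrib_right)
      also have "\<dots> = G (a, b)" unfolding G_def by (intro sum.cong refl) auto
      finally show "pr2 P m i j y a b * Rf i j y a b = G (a, b)" .
    qed
    also have "\<dots> = (\<Sum>ab\<in>pm1 \<times> pm1. G ab)"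
      by (rule sum.cartesian_product'[symmetric])
    also have "\<dots> = (\<Sum>s\<in>cube m. P y s * Rf i j y (s i) (s j))"
      unfolding G_def
    proof (rule sum.group)
      show "(\<lambda>s. (s i, s j)) ` cube m \<subseteq> pm1 \<times> pm1"
        using cube_memD[OF _ i] cube_memD[OF _ j] by (auto simp: pm1_iff)
    qed auto
    finally show ?thesis .
  qed
  then show ?thesis unfolding cmi_def Rf_def by simp
qed

lemma Rf_eq:
  assumes e: "e \<in> E" and s: "s \<in> cube m"
  shows "Rf (Min e) (Max e) y (s (Min e)) (s (Max e)) =
     ln (pr2 P m (Min e) (Max e) y (s (Min e)) (s (Max e)) / prY P m y)
     - ln (pr1 P m (Min e) y (s (Min e)) / prY P m y) - ln (pr1 P m (Max e) y (s (Max e)) / prY P m y)"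
proof -
  have a: "pr2 P m (Min e) (Max e) y (s (Min e)) (s (Max e)) / prY P m y > 0"
    using marg_pos[OF s, of e y] marg_pr2[OF e, of y s] prY_pos[of y] by simp
  have pm: "s (Min e) \<in> pm1" "s (Max e) \<in> pm1"
    using cube_memD[OF s] e_props[OF e] by (auto simp: pm1_iff)
  have b: "pr1 P m (Min e) y (s (Min e)) / prY P m y > 0"
    using pr1_pos[OF e_props(3)[OF e] pm(1)] prY_pos[of y] by simp
  have c: "pr1 P m (Max e) y (s (Max e)) / prY P m y > 0"
    using pr1_pos[OF e_props(4)[OF e] pm(2)] prY_pos[of y] by simp
  have "Rf (Min e) (Max e) y (s (Min e)) (s (Max e)) =
     ln (pr2 P m (Min e) (Max e) y (s (Min e)) (s (Max e)) / prY P m y)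
     - ln ((pr1 P m (Min e) y (s (Min e)) / prY P m y) * (pr1 P m (Max e) y (s (Max e)) / prY P m y))"
    unfolding Rf_def by (rule ln_divide_pos) (use a mult_pos_pos[OF b c] in auto)
  also have "ln ((pr1 P m (Min e) y (s (Min e)) / prY P m y) * (pr1 P m (Max e) y (s (Max e)) / prY P m y))
     = ln (pr1 P m (Min e) y (s (Min e)) / prY P m y) + ln (pr1 P m (Max e) y (s (Max e)) / prY P m y)"
    by (rule ln_mult_pos[OF b c])
  finally show ?thesis by simp
qed

lemma pointwise_id:
  assumes s: "s \<in> cube m"
  shows "ln (P y s) - ln (prY P m y) - (\<Sum>i<m. ln (pr1 P m i y (s i) / prY P m y))
     = (\<Sum>e\<in>E. Rf (Min e) (Max e) y (s (Min e)) (s (Max e)))"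
  unfolding ln_P_ratio[OF s] sum_lt_m[of "\<lambda>i. ln (pr1 P m i y (s i) / prY P m y)"]
  by (simp add: Rf_eq[OF _ s] sum_subtractf sum.distrib)

lemma struct_id:
  "(\<Sum>e\<in>E. cmi P m (Min e) (Max e)) =
     (\<Sum>y\<in>pm1. \<Sum>s\<in>cube m. P y s * ln (P y s)) - (\<Sum>y\<in>pm1. \<Sum>s\<in>cube m. P y s * ln (prY P m y))
     + (\<Sum>i<m. Hb (pp i))"
proof -
  have "(\<Sum>e\<in>E. cmi P m (Min e) (Max e)) =
     (\<Sum>e\<in>E. \<Sum>y\<in>pm1. \<Sum>s\<in>cube m. P y s * Rf (Min e) (Max e) y (s (Min e)) (s (Max e)))"
    by (intro sum.cong refl cmi_sum) (auto dest: e_props)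
  also have "\<dots> = (\<Sum>y\<in>pm1. \<Sum>s\<in>cube m. P y s * (\<Sum>e\<in>E. Rf (Min e) (Max e) y (s (Min e)) (s (Max e))))"
    by (simp add: sum_distrib_left sum.swap[of _ E])
  also have "\<dots> = (\<Sum>y\<in>pm1. \<Sum>s\<in>cube m. P y s * (ln (P y s) - ln (prY P m y) - (\<Sum>i<m. ln (pr1 P m i y (s i) / prY P m y))))"
    by (intro sum.cong refl) (simp add: pointwise_id)
  also have "\<dots> = (\<Sum>y\<in>pm1. \<Sum>s\<in>cube m. P y s * ln (P y s)) - (\<Sum>y\<in>pm1. \<Sum>s\<in>cube m. P y s * ln (prY P m y))
      - (\<Sum>i<m. \<Sum>y\<in>pm1. \<Sum>s\<in>cube m. P y s * ln (pr1 P m i y (s i) / prY P m y))"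
    by (simp add: right_diff_distrib sum_subtractf sum_distrib_left sum.swap[of _ "{..<m}"])
  also have "(\<Sum>i<m. \<Sum>y\<in>pm1. \<Sum>s\<in>cube m. P y s * ln (pr1 P m i y (s i) / prY P m y)) = (\<Sum>i<m. - Hb (pp i))"
    by (intro sum.cong refl ent_term) simp
  finally show ?thesis by (simp add: sum_negf)
qed

end

lemma Gn_nonneg: "n > 0 \<Longrightarrow> 0 \<le> x \<Longrightarrow> x \<le> 1 \<Longrightarrow> Gn n x \<ge> 0"
  by (auto simp: Gn_def)

lemma loss_core:
  fixes x :: "nat \<Rightarrow> real" and I :: "nat set"
  assumes n: "n > 0" and I: "finite I" and x: "\<And>i. i \<in> I \<Longrightarrow> 0 \<le> x i \<and> x i \<le> 1"
    and Y: "0 < Y" "Y \<le> 1" and q: "0 < q" and c: "c \<le> n"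
  shows "- ln ((\<Prod>i\<in>I. x i) * Y / (real c / real n)) \<le>
     (\<Sum>i\<in>I. Gn n (x i)) - ln Y + ln q + (real c / real n) / q - 1 + (if c = 0 then 1 - ln q else 0)"
proof -
  have G0: "(\<Sum>i\<in>I. Gn n (x i)) \<ge> 0" using x n by (intro sum_nonneg Gn_nonneg) auto
  have lY: "- ln Y \<ge> 0" using Y by simp
  show ?thesis
  proof (cases "c = 0")
    case True
    then show ?thesis using G0 lY by simp
  next
    case False
    define emp where "emp = real c / real n"
    have emp_pos: "emp > 0" using False n by (simp add: emp_def)
    have lemp: "ln emp \<le> ln q + emp / q - 1"
    proof -
      have "ln (emp / q) \<le> emp / q - 1" using emp_pos q by (intro ln_le_minus_one) simp
      then show ?thesis using emp_pos q by (simp add: ln_div)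
    qed
    have lemp2: "ln emp \<ge> - ln (real n)"
    proof -
      have "ln emp = ln (real c) - ln (real n)" using False n by (simp add: emp_def ln_div)
      moreover have "ln (real c) \<ge> 0" using False by simp
      ultimately show ?thesis by simp
    qed
    show ?thesis
    proof (cases "\<exists>i\<in>I. x i = 0")
      case True
      then obtain i where i: "i \<in> I" "x i = 0" by auto
      then have "(\<Prod>i\<in>I. x i) = 0" using I by (meson prod_zero_iff)
      then have L: "- ln ((\<Prod>i\<in>I. x i) * Y / (real c / real n)) = 0" by simp
      have "Gn n (x i) \<le> (\<Sum>i\<in>I. Gn n (x i))"
        using x n I i by (intro member_le_sum Gn_nonneg) auto
      then have "(\<Sum>i\<in>I. Gn n (x i)) \<ge> ln (real n)" using i by (simp add: Gn_def)
      then show ?thesis using L lY lemp lemp2 False unfolding emp_def by simp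
    next
      case False2: False
      have xpos: "x i > 0" if "i \<in> I" for i
      proof -
        have "x i \<noteq> 0" using False2 that by auto
        then show ?thesis using x[OF that] by auto
      qed
      have xne: "x i \<noteq> 0" if "i \<in> I" for i using xpos[OF that] by simp
      have pp: "(\<Prod>i\<in>I. x i) > 0" by (rule prod_pos) (rule xpos)
      have "ln ((\<Prod>i\<in>I. x i) * Y / emp) = ln (\<Prod>i\<in>I. x i) + ln Y - ln emp"
        using pp Y emp_pos by (simp add: ln_div ln_mult_pos)
      also have "ln (\<Prod>i\<in>I. x i) = (\<Sum>i\<in>I. ln (x i))"
        by (rule ln_prod[OF I xne])
      finally have "- ln ((\<Prod>i\<in>I. x i) * Y / emp) = (\<Sum>i\<in>I. - ln (x i)) - ln Y + ln emp"
        by (simp add: sum_negf)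
      also have "(\<Sum>i\<in>I. - ln (x i)) = (\<Sum>i\<in>I. Gn n (x i))"
        using xne by (intro sum.cong refl) (simp add: Gn_def)
      finally show ?thesis using lemp False unfolding emp_def by simp
    qed
  qed
qed

context ising_ctx
begin

definition Kc :: "nat \<Rightarrow> (nat \<Rightarrow> real \<times> (nat \<Rightarrow> real)) \<Rightarrow> nat \<Rightarrow> nat" where
  "Kc n D i = card {t\<in>{..<n}. snd (D t) i * fst (D t) = 1}"

definition Cs :: "nat \<Rightarrow> (nat \<Rightarrow> real \<times> (nat \<Rightarrow> real)) \<Rightarrow> (nat \<Rightarrow> real) \<Rightarrow> nat" where
  "Cs n D s = card {t\<in>{..<n}. snd (D t) = s}"

definition T1 where
  "T1 n D y s = (\<Sum>i<m. Gn n (if s i * y = 1 then real (Kc n D i) / real n else 1 - real (Kc n D i) / real n))"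

definition FT :: "nat \<Rightarrow> real \<Rightarrow> (nat \<Rightarrow> real) \<Rightarrow> nat \<Rightarrow> real" where
  "FT n y s k = - ln (prY P m y) + ln (prLam P s) + (real k / real n) / prLam P s - 1
      + (if k = 0 then 1 - ln (prLam P s) else 0)"

lemma Kc_le: "Kc n D i \<le> n"
  unfolding Kc_def using card_mono[of "{..<n}" "{t\<in>{..<n}. snd (D t) i * fst (D t) = 1}"] by auto

lemma Cs_le: "Cs n D s \<le> n"
  unfolding Cs_def using card_mono[of "{..<n}" "{t\<in>{..<n}. snd (D t) = s}"] by auto

lemma src_eq:
  assumes D: "D \<in> datasets m n" and n: "n > 0" and i: "i < m" and y: "y \<in> pm1" and s: "s \<in> cube m"
  shows "src_cond (acc_est n D i) (s i) y = (if s i * y = 1 then real (Kc n D i) / real n else 1 - real (Kc n D i) / real n)"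
proof -
  have a: "acc_est n D i = (2 * real (Kc n D i) - real n) / real n"
    using acc_est_count[OF D i n] by (simp add: Kc_def)
  have "s i * y = 1 \<or> s i * y = -1" using cube_memD[OF s i] y by (auto simp: pm1_iff)
  then show ?thesis
  proof
    assume h: "s i * y = 1"
    show ?thesis unfolding src_cond_def a h using n by (simp add: field_simps)
  next
    assume h: "s i * y = -1"
    show ?thesis unfolding src_cond_def a h using n by (simp add: field_simps)
  qed
qed

lemma prLam_le1: assumes "s \<in> cube m" shows "prLam P s \<le> 1"
proof -
  have "prLam P s = (\<Sum>y\<in>pm1. P y s)" by (simp add: prLam_def)
  also have "\<dots> \<le> (\<Sum>y\<in>pm1. \<Sum>s\<in>cube m. P y s)"
    using assms by (intro sum_mono member_le_sum) (auto intro: less_imp_le P_pos)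
  also have "\<dots> = 1" by (rule tot)
  finally show ?thesis .
qed

lemma loss_bound:
  assumes D: "D \<in> datasets m n" and n: "n > 0" and y: "y \<in> pm1" and s: "s \<in> cube m"
  shows "loss P m n D y s \<le> T1 n D y s + FT n y s (Cs n D s)"
proof -
  have lp: "loss P m n D y s = - ln (post_est P m n D y s)"
    using y by (auto simp: loss_def pm1_iff)
  define x where "x i = src_cond (acc_est n D i) (s i) y" for i
  have xe: "x i = (if s i * y = 1 then real (Kc n D i) / real n else 1 - real (Kc n D i) / real n)" if "i < m" for i
    unfolding x_def by (rule src_eq[OF D n that y s])
  have xb: "0 \<le> x i \<and> x i \<le> 1" if "i \<in> {..<m}" for i
    using xe[of i] that Kc_le[of n D i] n by (auto simp: field_simps)
  have post: "post_est P m n D y s = (\<Prod>i\<in>{..<m}. x i) * prY P m y / (real (Cs n D s) / real n)"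
    by (simp add: post_est_def x_def emp_lam_def Cs_def)
  have "- ln (post_est P m n D y s) \<le> (\<Sum>i\<in>{..<m}. Gn n (x i)) - ln (prY P m y) + ln (prLam P s)
      + (real (Cs n D s) / real n) / prLam P s - 1 + (if Cs n D s = 0 then 1 - ln (prLam P s) else 0)"
    unfolding post
    by (rule loss_core[OF n _ xb prY_pos prY_le1[OF y] prLam_pos Cs_le]) auto
  also have "(\<Sum>i\<in>{..<m}. Gn n (x i)) = T1 n D y s"
    unfolding T1_def by (intro sum.cong refl) (simp add: xe)
  finally show ?thesis unfolding lp FT_def by simp
qed

end

context ising_ctx
begin

lemma w_nonneg: "pr_data P n D \<ge> 0"
  unfolding pr_data_def by (intro prod_nonneg) (auto intro: less_imp_le P_pos)

lemma sumT1: "(\<Sum>y\<in>pm1. \<Sum>s\<in>cube m. P y s * T1 n D y s) = (\<Sum>i<m. Vn n (pp i) (Kc n D i))"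
proof -
  have fin: "finite (pm1 \<times> cube m)" by simp
  have "(\<Sum>y\<in>pm1. \<Sum>s\<in>cube m. P y s * T1 n D y s)
      = (\<Sum>i<m. \<Sum>y\<in>pm1. \<Sum>s\<in>cube m. P y s * Gn n (if s i * y = 1 then real (Kc n D i) / real n else 1 - real (Kc n D i) / real n))"
    unfolding T1_def by (simp add: sum_distrib_left sum.swap[of _ "{..<m}"])
  also have "\<dots> = (\<Sum>i<m. Vn n (pp i) (Kc n D i))"
  proof (intro sum.cong refl)
    fix i assume i: "i \<in> {..<m}"
    have ppd: "(\<Sum>x\<in>{x\<in>pm1 \<times> cube m. snd x i * fst x = 1}. P (fst x) (snd x)) = pp i" by (simp add: pp_def)
    have "(\<Sum>y\<in>pm1. \<Sum>s\<in>cube m. P y s * Gn n (if s i * y = 1 then real (Kc n D i) / real n else 1 - real (Kc n D i) / real n))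
       = (\<Sum>x\<in>pm1 \<times> cube m. P (fst x) (snd x) * (\<lambda>b. Gn n (if b then real (Kc n D i) / real n else 1 - real (Kc n D i) / real n)) (snd x i * fst x = 1))"
      by (simp add: sum.cartesian_product case_prod_beta)
    also have "\<dots> = pp i * Gn n (real (Kc n D i) / real n) + (1 - pp i) * Gn n (1 - real (Kc n D i) / real n)"
      using sum_split_pred[OF fin, where f = "\<lambda>x. P (fst x) (snd x)" and g = "\<lambda>b. Gn n (if b then real (Kc n D i) / real n else 1 - real (Kc n D i) / real n)"
        and \<phi> = "\<lambda>x. snd x i * fst x = 1"]
        sum_compl_pred[OF fin, where f = "\<lambda>x. P (fst x) (snd x)" and \<phi> = "\<lambda>x. snd x i * fst x = 1"]
        tot_pair ppd
      by (simp only: ppd) (simp add: algebra_simps)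
    finally show "(\<Sum>y\<in>pm1. \<Sum>s\<in>cube m. P y s * Gn n (if s i * y = 1 then real (Kc n D i) / real n else 1 - real (Kc n D i) / real n))
       = Vn n (pp i) (Kc n D i)" by (simp add: Vn_def)
  qed
  finally show ?thesis .
qed

lemma ET1: "(\<Sum>D\<in>datasets m n. pr_data P n D * (\<Sum>i<m. Vn n (pp i) (Kc n D i))) = (\<Sum>i<m. BS n (pp i) (Vn n (pp i)))"
proof -
  have "(\<Sum>D\<in>datasets m n. pr_data P n D * (\<Sum>i<m. Vn n (pp i) (Kc n D i)))
      = (\<Sum>i<m. \<Sum>D\<in>datasets m n. pr_data P n D * Vn n (pp i) (Kc n D i))"
    by (simp add: sum_distrib_left sum.swap[of _ "{..<m}"])
  also have "\<dots> = (\<Sum>i<m. BS n (pp i) (Vn n (pp i)))"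
  proof (intro sum.cong refl)
    fix i
    show "(\<Sum>D\<in>datasets m n. pr_data P n D * Vn n (pp i) (Kc n D i)) = BS n (pp i) (Vn n (pp i))"
      unfolding Kc_def
      by (rule data_binom[OF tot_pair, where \<phi> = "\<lambda>x. snd x i * fst x = 1"]) (simp add: pp_def)
  qed
  finally show ?thesis .
qed

lemma q_s: assumes "s \<in> cube m" shows "(\<Sum>x\<in>{x\<in>pm1 \<times> cube m. snd x = s}. P (fst x) (snd x)) = prLam P s"
proof -
  have "{x\<in>pm1 \<times> cube m. snd x = s} = pm1 \<times> {s}" using assms by auto
  then show ?thesis by (simp add: sum.cartesian_product' prLam_def)
qed

lemma ET2:
  assumes n: "n > 0" and s: "s \<in> cube m"
  shows "(\<Sum>D\<in>datasets m n. pr_data P n D * FT n y s (Cs n D s)) =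
     - ln (prY P m y) + ln (prLam P s) + (1 - prLam P s) ^ n * (1 - ln (prLam P s))"
proof -
  define q where "q = prLam P s"
  have q: "q > 0" using prLam_pos by (simp add: q_def)
  have 1: "(\<Sum>D\<in>datasets m n. pr_data P n D * FT n y s (Cs n D s)) = BS n q (FT n y s)"
    unfolding Cs_def q_def
    by (rule data_binom[OF tot_pair, where \<phi> = "\<lambda>x. snd x = s"]) (rule q_s[OF s, symmetric])
  have 2: "FT n y s = (\<lambda>k. ((- ln (prY P m y) + ln q - 1) + (1 / q) * (real k / real n)) + (if k = 0 then 1 - ln q else 0))"
    by (auto simp: FT_def q_def fun_eq_iff)
  have 3: "BS n q (\<lambda>k. ((- ln (prY P m y) + ln q - 1) + (1 / q) * (real k / real n)) + (if k = 0 then 1 - ln q else 0))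
      = (- ln (prY P m y) + ln q - 1) + (1 / q) * q + (1 - q) ^ n * (1 - ln q)"
    by (simp only: BS_add BS_const BS_cmult BS_mean[OF n] BS_zero)
  have "(\<Sum>D\<in>datasets m n. pr_data P n D * FT n y s (Cs n D s)) = BS n q (FT n y s)" by (rule 1)
  also have "\<dots> = BS n q (\<lambda>k. ((- ln (prY P m y) + ln q - 1) + (1 / q) * (real k / real n)) + (if k = 0 then 1 - ln q else 0))"
    by (rule arg_cong[where f = "BS n q", OF 2])
  also have "\<dots> = (- ln (prY P m y) + ln q - 1) + (1 / q) * q + (1 - q) ^ n * (1 - ln q)" by (rule 3)
  finally have "(\<Sum>D\<in>datasets m n. pr_data P n D * FT n y s (Cs n D s)) = (- ln (prY P m y) + ln q - 1) + (1 / q) * q + (1 - q) ^ n * (1 - ln q)" .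
  then show ?thesis using q by (simp add: q_def)
qed

lemma gen_err_bound:
  assumes n: "n > 0"
  shows "gen_err P m n \<le> (\<Sum>i<m. BS n (pp i) (Vn n (pp i)))
     + (\<Sum>y\<in>pm1. \<Sum>s\<in>cube m. P y s * (- ln (prY P m y) + ln (prLam P s) + (1 - prLam P s) ^ n * (1 - ln (prLam P s))))"
proof -
  have "gen_err P m n \<le> (\<Sum>D\<in>datasets m n. pr_data P n D * (\<Sum>y\<in>pm1. \<Sum>s\<in>cube m. P y s * (T1 n D y s + FT n y s (Cs n D s))))"
    unfolding gen_err_def
  proof (rule sum_mono)
    fix D assume D: "D \<in> datasets m n"
    have "(\<Sum>y\<in>pm1. \<Sum>s\<in>cube m. P y s * loss P m n D y s) \<le> (\<Sum>y\<in>pm1. \<Sum>s\<in>cube m. P y s * (T1 n D y s + FT n y s (Cs n D s)))"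
    proof (intro sum_mono)
      fix y s assume y: "y \<in> pm1" and s: "s \<in> cube m"
      show "P y s * loss P m n D y s \<le> P y s * (T1 n D y s + FT n y s (Cs n D s))"
        using loss_bound[OF D n y s] P_pos[of y s] by (intro mult_left_mono) auto
    qed
    then show "pr_data P n D * (\<Sum>y\<in>pm1. \<Sum>s\<in>cube m. P y s * loss P m n D y s) \<le>
       pr_data P n D * (\<Sum>y\<in>pm1. \<Sum>s\<in>cube m. P y s * (T1 n D y s + FT n y s (Cs n D s)))"
      by (rule mult_left_mono[OF _ w_nonneg])
  qed
  also have "\<dots> = (\<Sum>D\<in>datasets m n. pr_data P n D * (\<Sum>i<m. Vn n (pp i) (Kc n D i)))
      + (\<Sum>D\<in>datasets m n. pr_data P n D * (\<Sum>y\<in>pm1. \<Sum>s\<in>cube m. P y s * FT n y s (Cs n D s)))"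
    by (simp add: distrib_left sum.distrib sumT1[symmetric])
  also have "(\<Sum>D\<in>datasets m n. pr_data P n D * (\<Sum>y\<in>pm1. \<Sum>s\<in>cube m. P y s * FT n y s (Cs n D s)))
      = (\<Sum>y\<in>pm1. \<Sum>s\<in>cube m. P y s * (\<Sum>D\<in>datasets m n. pr_data P n D * FT n y s (Cs n D s)))"
    by (simp add: sum_distrib_left sum.swap[of _ "datasets m n"] algebra_simps)
  also have "\<dots> = (\<Sum>y\<in>pm1. \<Sum>s\<in>cube m. P y s * (- ln (prY P m y) + ln (prLam P s) + (1 - prLam P s) ^ n * (1 - ln (prLam P s))))"
    by (intro sum.cong refl) (simp add: ET2[OF n])
  finally show ?thesis by (simp add: ET1)
qed

lemma cond_ent_eq:
  "cond_ent P m = - (\<Sum>y\<in>pm1. \<Sum>s\<in>cube m. P y s * ln (P y s)) + (\<Sum>y\<in>pm1. \<Sum>s\<in>cube m. P y s * ln (prLam P s))"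
proof -
  have "(\<Sum>y\<in>pm1. \<Sum>s\<in>cube m. P y s * ln (P y s / prLam P s)) =
        (\<Sum>y\<in>pm1. \<Sum>s\<in>cube m. P y s * ln (P y s) - P y s * ln (prLam P s))"
    using P_pos prLam_pos by (intro sum.cong refl) (simp add: ln_divide_pos right_diff_distrib)
  then show ?thesis unfolding cond_ent_def by (simp add: sum_subtractf)
qed

lemma excess_bound:
  assumes n: "n > 0"
  shows "excess_err P m n \<le> (\<Sum>e\<in>E. cmi P m (Min e) (Max e))
     + (\<Sum>i<m. BS n (pp i) (Vn n (pp i)) - Hb (pp i))
     + (\<Sum>y\<in>pm1. \<Sum>s\<in>cube m. P y s * ((1 - prLam P s) ^ n * (1 - ln (prLam P s))))"
proof -
  define A where "A = (\<Sum>y\<in>pm1. \<Sum>s\<in>cube m. P y s * ln (P y s))"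
  define B where "B = (\<Sum>y\<in>pm1. \<Sum>s\<in>cube m. P y s * ln (prY P m y))"
  define C where "C = (\<Sum>y\<in>pm1. \<Sum>s\<in>cube m. P y s * ln (prLam P s))"
  define Tl where "Tl = (\<Sum>y\<in>pm1. \<Sum>s\<in>cube m. P y s * ((1 - prLam P s) ^ n * (1 - ln (prLam P s))))"
  define S where "S = (\<Sum>i<m. BS n (pp i) (Vn n (pp i)))"
  define H where "H = (\<Sum>i<m. Hb (pp i))"
  have split: "(\<Sum>y\<in>pm1. \<Sum>s\<in>cube m. P y s * (- ln (prY P m y) + ln (prLam P s) + (1 - prLam P s) ^ n * (1 - ln (prLam P s))))
      = - B + C + Tl"
    unfolding B_def C_def Tl_def by (simp add: distrib_left right_diff_distrib sum.distrib sum_negf sum_subtractf)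
  have g: "gen_err P m n \<le> S - B + C + Tl" using gen_err_bound[OF n] split unfolding S_def by simp
  have c: "cond_ent P m = - A + C" using cond_ent_eq unfolding A_def C_def .
  have st: "(\<Sum>e\<in>E. cmi P m (Min e) (Max e)) = A - B + H" using struct_id unfolding A_def B_def H_def .
  have d: "(\<Sum>i<m. BS n (pp i) (Vn n (pp i)) - Hb (pp i)) = S - H" unfolding S_def H_def by (rule sum_subtractf)
  show ?thesis unfolding excess_err_def Tl_def[symmetric] st d using g c by linarith
qed

end

context ising_ctx
begin

lemma excess_asymp:
  assumes c: "c > 0"
  shows "eventually (\<lambda>n. excess_err P m n \<le> real m / (2 * real n) + (\<Sum>e\<in>E. cmi P m (Min e) (Max e)) + c / real n) sequentially"
proof -
  define X where "X = pm1 \<times> cube m"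
  have finX: "finite X" by (simp add: X_def)
  have Xne: "X \<noteq> {}" using cube_nonempty by (auto simp: X_def pm1_def)
  define N where "N = card X"
  have N: "N > 0" using finX Xne by (simp add: N_def card_gt_0_iff)
  define \<epsilon>1 where "\<epsilon>1 = c / (2 * (real m + 1))"
  define \<epsilon>2 where "\<epsilon>2 = c / (2 * real N)"
  have e1: "\<epsilon>1 > 0" using c by (simp add: \<epsilon>1_def)
  have e2: "\<epsilon>2 > 0" using c N by (simp add: \<epsilon>2_def)
  have ev1: "eventually (\<lambda>n. \<forall>i\<in>{..<m}. BS n (pp i) (Vn n (pp i)) \<le> Hb (pp i) + 1 / (2 * real n) + \<epsilon>1 / real n) sequentially"
    by (intro eventually_ball_finite ballI Vn_asymp pp_bounds e1) auto
  have ev2: "eventually (\<lambda>n. \<forall>x\<in>X. (1 - prLam P (snd x)) ^ n * (P (fst x) (snd x) * (1 - ln (prLam P (snd x)))) \<le> \<epsilon>2 / real n) sequentially"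
  proof (intro eventually_ball_finite ballI finX)
    fix x assume x: "x \<in> X"
    then have s: "snd x \<in> cube m" by (auto simp: X_def)
    show "eventually (\<lambda>n. (1 - prLam P (snd x)) ^ n * (P (fst x) (snd x) * (1 - ln (prLam P (snd x)))) \<le> \<epsilon>2 / real n) sequentially"
      by (rule pow_asymp[OF prLam_pos prLam_le1[OF s] e2])
  qed
  show ?thesis
    using ev1 ev2 eventually_gt_at_top[of 0]
  proof eventually_elim
    case (elim n)
    then have n: "n > 0" by simp
    have A: "(\<Sum>i<m. BS n (pp i) (Vn n (pp i)) - Hb (pp i)) \<le> (\<Sum>i<m. 1 / (2 * real n) + \<epsilon>1 / real n)"
    proof (intro sum_mono)
      fix i assume "i \<in> {..<m}"
      then have "BS n (pp i) (Vn n (pp i)) \<le> Hb (pp i) + 1 / (2 * real n) + \<epsilon>1 / real n" using elim by blast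
      then show "BS n (pp i) (Vn n (pp i)) - Hb (pp i) \<le> 1 / (2 * real n) + \<epsilon>1 / real n" by linarith
    qed
    also have "\<dots> = real m / (2 * real n) + real m * \<epsilon>1 / real n" by (simp add: algebra_simps)
    also have "real m * \<epsilon>1 \<le> c / 2"
    proof -
      have "real m * \<epsilon>1 = c / 2 * (real m / (real m + 1))" by (simp add: \<epsilon>1_def field_simps)
      also have "\<dots> \<le> c / 2 * 1" using c by (intro mult_left_mono) auto
      finally show ?thesis by simp
    qed
    hence "real m * \<epsilon>1 / real n \<le> (c / 2) / real n"
      using n by (intro divide_right_mono) auto
    hence "real m / (2 * real n) + real m * \<epsilon>1 / real n \<le> real m / (2 * real n) + (c / 2) / real n"
      by linarith
    finally have A': "(\<Sum>i<m. BS n (pp i) (Vn n (pp i)) - Hb (pp i)) \<le> real m / (2 * real n) + (c / 2) / real n" .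
    have "(\<Sum>y\<in>pm1. \<Sum>s\<in>cube m. P y s * ((1 - prLam P s) ^ n * (1 - ln (prLam P s))))
        = (\<Sum>x\<in>X. (1 - prLam P (snd x)) ^ n * (P (fst x) (snd x) * (1 - ln (prLam P (snd x)))))"
      unfolding X_def by (simp add: sum.cartesian_product case_prod_beta algebra_simps)
    also have "\<dots> \<le> (\<Sum>x\<in>X. \<epsilon>2 / real n)" using elim by (intro sum_mono) auto
    also have "\<dots> = (c / 2) / real n" using N by (simp add: \<epsilon>2_def N_def[symmetric])
    finally have B: "(\<Sum>y\<in>pm1. \<Sum>s\<in>cube m. P y s * ((1 - prLam P s) ^ n * (1 - ln (prLam P s)))) \<le> (c / 2) / real n" .
    have eq: "(c / 2) / real n + (c / 2) / real n = c / real n" by (simp add: field_simps)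
    show ?case using excess_bound[OF n] A' B eq by linarith
  qed
qed

end

theorem theorem2:
  fixes m :: nat and thY :: real and th :: "nat \<Rightarrow> real"
    and E :: "nat set set" and thE :: "nat set \<Rightarrow> real"
  assumes pairs: "\<forall>e\<in>E. e \<subseteq> {..<m} \<and> card e = 2"
    and disjoint: "\<forall>e\<in>E. \<forall>e'\<in>E. e \<noteq> e' \<longrightarrow> e \<inter> e' = {}"
    and nonneg_Y: "thY \<ge> 0"
    and nonneg_src: "\<forall>i<m. th i \<ge> 0"
    and nonneg_pair: "\<forall>e\<in>E. thE e \<ge> 0"
  shows "\<exists>r :: nat \<Rightarrow> real. r \<in> o(\<lambda>n. 1 / real n) \<and>
           (\<forall>n>0. excess_err (ising m thY th E thE) m n
                 \<le> real m / (2 * real n)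
                   + (\<Sum>e\<in>E. cmi (ising m thY th E thE) m (Min e) (Max e))
                   + r n)"
proof -
  interpret ising_ctx m thY th E thE
    by unfold_locales (use pairs disjoint in auto)
  define B where "B = (\<Sum>e\<in>E. cmi (ising m thY th E thE) m (Min e) (Max e))"
  define r where "r n = max 0 (excess_err (ising m thY th E thE) m n - real m / (2 * real n) - B)" for n
  have "r \<in> o(\<lambda>n. 1 / real n)"
  proof (rule landau_o.smallI)
    fix c :: real assume c: "c > 0"
    show "eventually (\<lambda>n. norm (r n) \<le> c * norm (1 / real n)) at_top"
      using excess_asymp[OF c] eventually_gt_at_top[of 0]
    proof eventually_elim
      case (elim n)
      then show ?case using c by (auto simp: r_def B_def)
    qed
  qed
  moreover have "\<forall>n>0. excess_err (ising m thY th E thE) m n \<le> real m / (2 * real n) + B + r n"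
    by (auto simp: r_def)
  ultimately show ?thesis unfolding B_def by blast
qed

end
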